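(* Let $W:[0,1]^2\to[0,1]$ be a Hölder-by-parts graphon whose integral operator has a finite number $m_W$ of distinct nonzero eigenvalues. Then there exists a vector $\beta^{*,m_W}=(\beta^{*,m_W}_1,\dots,\beta^{*,m_W}_{m_W})\in\mathbb R^{m_W}$ such that for all $(x,y)\in[0,1]^2$, $$W(x,y)=\sum_{i=1}^{m_W}\beta_i^{*,m_W}\,W^{(i+1)}(x,y).$$
   Context: A graphon is a symmetric measurable $W:[0,1]^2\to[0,1]$. Hölder-by-parts: there is a finite partition $\mathcal Q$ of $[0,1]$ into pairwise disjoint connected sets $Q$ with $\mu(\mathrm{int}(Q))>0$ and $\mu(\mathrm{cl}(Q)\setminus\mathrm{int}(Q))=0$ ($\mu$ Lebesgue measure) and constants $\beta,M$ such that $W$ is $(\beta,M)$-Hölder on each $Q_a\times Q_b$. The integral operator is $T_W[f](x)=\int_0^1W(x,y)f(y)dy$ on $L^2([0,1])$; it is compact self-adjoint and $W(x,y)=\sum_i\mu_i\phi_i(x)\phi_i(y)$ with eigenvalues $\mu_i$ and orthonormal eigenfunctions $\phi_i$. $m_W$ (the distinct rank) is the number of distinct nonzero eigenvalues. Moments: $W^{(k)}(x,y)=\int_{[0,1]^{k-1}}W(x,t_1)W(t_1,t_2)\cdots W(t_{k-1},y)\,dt_1\cdots dt_{k-1}$. *)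

theory Defs
  imports "HOL-Analysis.Analysis"
begin

definition graphon :: "(real \<Rightarrow> real \<Rightarrow> real) \<Rightarrow> bool" where
  "graphon W \<longleftrightarrow>
     (\<forall>x\<in>{0..1}. \<forall>y\<in>{0..1}. W x y = W y x \<and> 0 \<le> W x y \<and> W x y \<le> 1) \<and>
     case_prod W \<in> borel_measurable (restrict_space (lborel \<Otimes>\<^sub>M lborel) ({0..1} \<times> {0..1}))"

definition holder_on :: "real \<Rightarrow> real \<Rightarrow> (real \<times> real) set \<Rightarrow> (real \<Rightarrow> real \<Rightarrow> real) \<Rightarrow> bool" where
  "holder_on \<beta> M S W \<longleftrightarrow>
     (\<forall>p\<in>S. \<forall>q\<in>S. \<bar>case_prod W p - case_prod W q\<bar> \<le> M * (dist p q) powr \<beta>)"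

definition holder_by_parts :: "(real \<Rightarrow> real \<Rightarrow> real) \<Rightarrow> bool" where
  "holder_by_parts W \<longleftrightarrow>
     (\<exists>\<Q> \<beta> M. finite \<Q> \<and> \<Union>\<Q> = {0..1} \<and> pairwise disjnt \<Q> \<and>
        (\<forall>Q\<in>\<Q>. connected Q \<and> emeasure lborel (interior Q) > 0 \<and>
                 emeasure lborel (closure Q - interior Q) = 0) \<and>
        \<beta> > 0 \<and>
        (\<forall>Qa\<in>\<Q>. \<forall>Qb\<in>\<Q>. holder_on \<beta> M (Qa \<times> Qb) W))"

definition graphon_eigenvalues :: "(real \<Rightarrow> real \<Rightarrow> real) \<Rightarrow> real set" where
  "graphon_eigenvalues W = {\<mu>. \<mu> \<noteq> 0 \<and>
     (\<exists>f :: real \<Rightarrow> real. f \<in> borel_measurable lborel \<and>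
        set_integrable lborel {0..1} (\<lambda>y. (f y)\<^sup>2) \<and>
        \<not> (AE x in lborel. x \<in> {0..1} \<longrightarrow> f x = 0) \<and>
        (AE x in lborel. x \<in> {0..1} \<longrightarrow>
            (LINT y:{0..1}|lborel. W x y * f y) = \<mu> * f x))}"

definition distinct_rank :: "(real \<Rightarrow> real \<Rightarrow> real) \<Rightarrow> nat" where
  "distinct_rank W = card (graphon_eigenvalues W)"

text \<open>Moments W^(k), k \<ge> 1, defined by iterated integration:
  W^(1) = W and W^(k+1)(x,y) = int_0^1 W(x,t) W^(k)(t,y) dt
  (equal, by Fubini, to the (k-1)-fold integral over [0,1]^(k-1)).
  The value for k = 0 is an unused convention.\<close>
fun graphon_moment :: "(real \<Rightarrow> real \<Rightarrow> real) \<Rightarrow> nat \<Rightarrow> real \<Rightarrow> real \<Rightarrow> real" where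
  "graphon_moment W 0 = (\<lambda>x y. 0)"
| "graphon_moment W (Suc 0) = W"
| "graphon_moment W (Suc (Suc k)) =
     (\<lambda>x y. LINT t:{0..1}|lborel. W x t * graphon_moment W (Suc k) t y)"

end

theory Submission
  imports Defs "HOL-Complex_Analysis.Great_Picard" "HOL-Computational_Algebra.Polynomial"
begin

definition L2 :: "(real \<Rightarrow> real) \<Rightarrow> bool" where
  "L2 f \<longleftrightarrow> f \<in> borel_measurable lborel \<and> integrable lborel (\<lambda>x. (f x)\<^sup>2) \<and>
     (\<forall>x. x \<notin> {0..1} \<longrightarrow> f x = 0)"

definition ip :: "(real \<Rightarrow> real) \<Rightarrow> (real \<Rightarrow> real) \<Rightarrow> real" where
  "ip f g = (\<integral>x. f x * g x \<partial>lborel)"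

definition nrm :: "(real \<Rightarrow> real) \<Rightarrow> real" where
  "nrm f = sqrt (ip f f)"

lemma L2D: assumes "L2 f"
  shows "f \<in> borel_measurable lborel" "integrable lborel (\<lambda>x. (f x)\<^sup>2)"
    "\<And>x. x \<notin> {0..1} \<Longrightarrow> f x = 0"
  using assms unfolding L2_def by auto

lemma L2_lin[intro]:
  assumes "L2 f" "L2 g"
  shows "L2 (\<lambda>x. c * f x + d * g x)"
proof -
  have m: "(\<lambda>x. c * f x + d * g x) \<in> borel_measurable lborel"
    using L2D(1)[OF assms(1)] L2D(1)[OF assms(2)] by measurable
  have i: "integrable lborel (\<lambda>x. 2 * c\<^sup>2 * (f x)\<^sup>2 + 2 * d\<^sup>2 * (g x)\<^sup>2)"
    using L2D(2)[OF assms(1)] L2D(2)[OF assms(2)] by auto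
  have "integrable lborel (\<lambda>x. (c * f x + d * g x)\<^sup>2)"
  proof (rule Bochner_Integration.integrable_bound[OF i])
    show "(\<lambda>x. (c * f x + d * g x)\<^sup>2) \<in> borel_measurable lborel" using m by measurable
    show "AE x in lborel. norm ((c * f x + d * g x)\<^sup>2) \<le> norm (2 * c\<^sup>2 * (f x)\<^sup>2 + 2 * d\<^sup>2 * (g x)\<^sup>2)"
    proof (rule AE_I2)
      fix x
      have "(c * f x + d * g x)\<^sup>2 \<le> 2 * c\<^sup>2 * (f x)\<^sup>2 + 2 * d\<^sup>2 * (g x)\<^sup>2"
      proof -
        have "2 * c\<^sup>2 * (f x)\<^sup>2 + 2 * d\<^sup>2 * (g x)\<^sup>2 - (c * f x + d * g x)\<^sup>2 = (c * f x - d * g x)\<^sup>2"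
          by (simp add: power2_eq_square algebra_simps)
        then show ?thesis by (metis diff_ge_0_iff_ge zero_le_power2)
      qed
      then show "norm ((c * f x + d * g x)\<^sup>2) \<le> norm (2 * c\<^sup>2 * (f x)\<^sup>2 + 2 * d\<^sup>2 * (g x)\<^sup>2)"
        by simp
    qed
  qed
  then show ?thesis using m L2D(3)[OF assms(1)] L2D(3)[OF assms(2)] unfolding L2_def by auto
qed

lemma L2_zero[intro]: "L2 (\<lambda>x. 0)"
  unfolding L2_def by auto

lemma L2_scale[intro]: "L2 f \<Longrightarrow> L2 (\<lambda>x. c * f x)"
  using L2_lin[of f f c 0] by simp

lemma L2_add[intro]: "L2 f \<Longrightarrow> L2 g \<Longrightarrow> L2 (\<lambda>x. f x + g x)"
  using L2_lin[of f g 1 1] by simp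

lemma L2_diff[intro]: "L2 f \<Longrightarrow> L2 g \<Longrightarrow> L2 (\<lambda>x. f x - g x)"
  using L2_lin[of f g 1 "-1"] by simp

lemma L2_sum[intro]: "finite I \<Longrightarrow> (\<And>i. i \<in> I \<Longrightarrow> L2 (u i)) \<Longrightarrow> L2 (\<lambda>x. \<Sum>i\<in>I. u i x)"
  by (induction I rule: finite_induct) auto

lemma L2_integrable_mult:
  assumes "L2 f" "L2 g"
  shows "integrable lborel (\<lambda>x. f x * g x)"
proof (rule Bochner_Integration.integrable_bound[of _ "\<lambda>x. (f x)\<^sup>2 + (g x)\<^sup>2"])
  show "integrable lborel (\<lambda>x. (f x)\<^sup>2 + (g x)\<^sup>2)"
    using L2D(2)[OF assms(1)] L2D(2)[OF assms(2)] by auto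
  show "(\<lambda>x. f x * g x) \<in> borel_measurable lborel"
    using L2D(1)[OF assms(1)] L2D(1)[OF assms(2)] by measurable
  show "AE x in lborel. norm (f x * g x) \<le> norm ((f x)\<^sup>2 + (g x)\<^sup>2)"
  proof (rule AE_I2)
    fix x
    have "\<bar>f x * g x\<bar> \<le> (f x)\<^sup>2 + (g x)\<^sup>2"
    proof -
      have a: "(f x)\<^sup>2 + (g x)\<^sup>2 - 2 * (f x * g x) = (f x - g x)\<^sup>2"
        by (simp add: power2_eq_square algebra_simps)
      have b: "(f x)\<^sup>2 + (g x)\<^sup>2 + 2 * (f x * g x) = (f x + g x)\<^sup>2"
        by (simp add: power2_eq_square algebra_simps)
      have "0 \<le> (f x)\<^sup>2 + (g x)\<^sup>2 - 2 * (f x * g x)" "0 \<le> (f x)\<^sup>2 + (g x)\<^sup>2 + 2 * (f x * g x)"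
        by (simp only: a b; simp)+
      then show ?thesis by (simp add: abs_le_iff)
    qed
    then show "norm (f x * g x) \<le> norm ((f x)\<^sup>2 + (g x)\<^sup>2)" by simp
  qed
qed

lemma int_ind: "integrable lborel (indicator {0..1::real} :: real \<Rightarrow> real)"
  by (rule integrable_real_indicator) auto

lemma int_ind_eq: "(\<integral>x. indicator {0..1::real} x \<partial>lborel) = (1::real)"
  by simp

lemma ind_sq: "(indicator A x :: real)\<^sup>2 = indicator A x" "(indicator A x :: real) * indicator A x = indicator A x"
  by (auto simp: indicator_def)

lemma L2_ind: "L2 (indicator {0..1})"
  unfolding L2_def using int_ind by (auto simp: ind_sq)

lemma L2_integrable:
  assumes "L2 f" shows "integrable lborel f"
proof -
  have "(\<lambda>x. f x * indicator {0..1} x) = f"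
    using L2D(3)[OF assms] by (auto simp: indicator_def fun_eq_iff)
  then show ?thesis using L2_integrable_mult[OF assms L2_ind] by simp
qed

lemma L2_abs[intro]: assumes "L2 f" shows "L2 (\<lambda>x. \<bar>f x\<bar>)"
  using assms unfolding L2_def by (auto simp: power2_abs)

lemma ip_sym: "ip f g = ip g f"
  unfolding ip_def by (simp add: mult.commute)

lemma ip_lin:
  assumes "L2 f" "L2 g" "L2 h"
  shows "ip (\<lambda>x. c * f x + d * g x) h = c * ip f h + d * ip g h"
proof -
  have "ip (\<lambda>x. c * f x + d * g x) h = (\<integral>x. c * (f x * h x) + d * (g x * h x) \<partial>lborel)"
    unfolding ip_def by (simp add: algebra_simps)
  also have "\<dots> = c * ip f h + d * ip g h"
    unfolding ip_def using L2_integrable_mult[OF assms(1,3)] L2_integrable_mult[OF assms(2,3)]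
    by simp
  finally show ?thesis .
qed

lemma ip_lin2:
  assumes "L2 f" "L2 g" "L2 h"
  shows "ip h (\<lambda>x. c * f x + d * g x) = c * ip h f + d * ip h g"
  using ip_lin[OF assms, of c d] by (simp add: ip_sym)

lemma ip_nonneg: "ip f f \<ge> 0"
  unfolding ip_def by simp

lemma ip_scale: "L2 f \<Longrightarrow> L2 g \<Longrightarrow> ip (\<lambda>x. c * f x) g = c * ip f g"
  using ip_lin[of f f g c 0] by simp

lemma ip_scale2: "L2 f \<Longrightarrow> L2 g \<Longrightarrow> ip g (\<lambda>x. c * f x) = c * ip g f"
  using ip_scale by (simp add: ip_sym)

lemma ip_diff_self:
  assumes "L2 f" "L2 g"
  shows "ip (\<lambda>x. f x - c * g x) (\<lambda>x. f x - c * g x) = ip f f - 2 * c * ip f g + c\<^sup>2 * ip g g"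
proof -
  have "ip (\<lambda>x. f x - c * g x) (\<lambda>x. f x - c * g x) = (\<integral>x. (f x * f x) + (- 2 * c) * (f x * g x) + c\<^sup>2 * (g x * g x) \<partial>lborel)"
    unfolding ip_def by (rule Bochner_Integration.integral_cong) (auto simp: algebra_simps power2_eq_square)
  also have "\<dots> = ip f f - 2 * c * ip f g + c\<^sup>2 * ip g g"
    unfolding ip_def using L2_integrable_mult[OF assms(1,1)] L2_integrable_mult[OF assms(1,2)]
      L2_integrable_mult[OF assms(2,2)] by simp
  finally show ?thesis .
qed

lemma cauchy_schwarz:
  assumes "L2 f" "L2 g"
  shows "\<bar>ip f g\<bar> \<le> nrm f * nrm g"
proof -
  have Q: "0 \<le> ip f f - 2 * c * ip f g + c\<^sup>2 * ip g g" for c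
    using ip_diff_self[OF assms, of c] ip_nonneg[of "\<lambda>x. f x - c * g x"] by simp
  have "(ip f g)\<^sup>2 \<le> ip f f * ip g g"
  proof (cases "ip g g = 0")
    case True
    have "ip f g = 0"
    proof (rule ccontr)
      assume ne: "ip f g \<noteq> 0"
      have "0 \<le> ip f f - 2 * ((ip f f + 1) / (2 * ip f g)) * ip f g"
        using Q[of "(ip f f + 1) / (2 * ip f g)"] True by simp
      also have "\<dots> = -1" using ne by (simp add: field_simps)
      finally show False by simp
    qed
    then show ?thesis by (simp add: ip_nonneg)
  next
    case False
    then have pos: "ip g g > 0" using ip_nonneg[of g] by simp
    have "0 \<le> ip f f - 2 * (ip f g / ip g g) * ip f g + (ip f g / ip g g)\<^sup>2 * ip g g"
      using Q by blast
    also have "\<dots> = ip f f - (ip f g)\<^sup>2 / ip g g"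
      using pos by (simp add: field_simps power2_eq_square)
    finally show ?thesis using pos by (simp add: field_simps)
  qed
  then have "sqrt ((ip f g)\<^sup>2) \<le> sqrt (ip f f * ip g g)" by (rule real_sqrt_le_mono)
  then show ?thesis unfolding nrm_def by (simp add: real_sqrt_mult)
qed

lemma nrm_nonneg: "nrm f \<ge> 0"
  unfolding nrm_def using ip_nonneg by simp

lemma nrm_sq: "(nrm f)\<^sup>2 = ip f f"
  unfolding nrm_def using ip_nonneg by simp

lemma nrm_lin:
  assumes "L2 f" "L2 g"
  shows "nrm (\<lambda>x. c * f x + d * g x) \<le> \<bar>c\<bar> * nrm f + \<bar>d\<bar> * nrm g"
proof -
  have "(nrm (\<lambda>x. c * f x + d * g x))\<^sup>2 = c\<^sup>2 * ip f f + 2 * c * d * ip f g + d\<^sup>2 * ip g g"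
    unfolding nrm_sq using assms
    by (simp add: ip_lin ip_lin2 L2_lin ip_sym[of g f] power2_eq_square algebra_simps)
  also have "\<dots> \<le> c\<^sup>2 * (nrm f)\<^sup>2 + 2 * \<bar>c\<bar> * \<bar>d\<bar> * (nrm f * nrm g) + d\<^sup>2 * (nrm g)\<^sup>2"
  proof -
    have "2 * c * d * ip f g \<le> 2 * \<bar>c\<bar> * \<bar>d\<bar> * (nrm f * nrm g)"
    proof -
      have "c * d * ip f g \<le> \<bar>c * d * ip f g\<bar>" by (rule abs_ge_self)
      also have "\<dots> = (\<bar>c\<bar> * \<bar>d\<bar>) * \<bar>ip f g\<bar>" by (simp add: abs_mult)
      also have "\<dots> \<le> (\<bar>c\<bar> * \<bar>d\<bar>) * (nrm f * nrm g)"
        by (rule mult_left_mono[OF cauchy_schwarz[OF assms]]) simp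
      finally show ?thesis by simp
    qed
    then show ?thesis by (simp add: nrm_sq)
  qed
  also have "\<dots> = (\<bar>c\<bar> * nrm f + \<bar>d\<bar> * nrm g)\<^sup>2"
    by (simp add: power2_eq_square algebra_simps)
  finally show ?thesis
    using nrm_nonneg[of f] nrm_nonneg[of g] nrm_nonneg[of "\<lambda>x. c * f x + d * g x"]
    by (meson abs_ge_zero add_nonneg_nonneg mult_nonneg_nonneg power2_le_imp_le)
qed

lemma nrm_scale: "nrm (\<lambda>x. c * f x) = \<bar>c\<bar> * nrm f"
proof -
  have "ip (\<lambda>x. c * f x) (\<lambda>x. c * f x) = c\<^sup>2 * ip f f"
    unfolding ip_def by (simp add: power2_eq_square algebra_simps)
  then show ?thesis unfolding nrm_def by (simp add: real_sqrt_mult)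
qed

lemma nrm_add: "L2 f \<Longrightarrow> L2 g \<Longrightarrow> nrm (\<lambda>x. f x + g x) \<le> nrm f + nrm g"
  using nrm_lin[of f g 1 1] by simp

lemma nrm_diff: "L2 f \<Longrightarrow> L2 g \<Longrightarrow> nrm (\<lambda>x. f x - g x) \<le> nrm f + nrm g"
  using nrm_lin[of f g 1 "-1"] by simp

lemma nrm_minus_comm: "nrm (\<lambda>x. f x - g x) = nrm (\<lambda>x. g x - f x)"
  using nrm_scale[of "-1" "\<lambda>x. f x - g x"] by simp

lemma nrm_tri:
  assumes "L2 f" "L2 g" "L2 h"
  shows "nrm (\<lambda>x. f x - h x) \<le> nrm (\<lambda>x. f x - g x) + nrm (\<lambda>x. g x - h x)"
  using nrm_add[of "\<lambda>x. f x - g x" "\<lambda>x. g x - h x"] assms by auto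

lemma nrm_zero_AE:
  assumes "L2 f" "nrm f = 0"
  shows "AE x in lborel. f x = 0"
proof -
  have "ip f f = 0" using assms(2) nrm_sq[of f] by simp
  then have "integral\<^sup>L lborel (\<lambda>x. (f x)\<^sup>2) = 0" unfolding ip_def by (simp add: power2_eq_square)
  then have "AE x in lborel. (f x)\<^sup>2 = 0"
    using integral_nonneg_eq_0_iff_AE[OF L2D(2)[OF assms(1)]] by simp
  then show ?thesis by simp
qed

lemma AE_nrm_zero:
  assumes "L2 f" "AE x in lborel. f x = 0"
  shows "nrm f = 0"
proof -
  have "ip f f = 0" unfolding ip_def
    by (rule integral_eq_zero_AE) (use assms in auto)
  then show ?thesis unfolding nrm_def by simp
qed

lemma ip_ind_abs:
  assumes "L2 f" shows "(\<integral>x. \<bar>f x\<bar> \<partial>lborel) \<le> nrm f"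
proof -
  have "nrm (indicator {0..1}) = 1"
    unfolding nrm_def ip_def by (simp add: ind_sq)
  moreover have "ip (\<lambda>x. \<bar>f x\<bar>) (indicator {0..1}) = (\<integral>x. \<bar>f x\<bar> \<partial>lborel)"
    unfolding ip_def using L2D(3)[OF assms]
    by (intro Bochner_Integration.integral_cong) (auto simp: indicator_def)
  moreover have "nrm (\<lambda>x. \<bar>f x\<bar>) = nrm f"
    unfolding nrm_def ip_def by (simp add: abs_mult_self_eq)
  ultimately show ?thesis
    using cauchy_schwarz[OF L2_abs[OF assms] L2_ind] by simp
qed

definition kern :: "(real \<Rightarrow> real \<Rightarrow> real) \<Rightarrow> bool" where
  "kern K \<longleftrightarrow> case_prod K \<in> borel_measurable (lborel \<Otimes>\<^sub>M lborel) \<and> (\<forall>x y. \<bar>K x y\<bar> \<le> 1) \<and>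
     (\<forall>x y. x \<notin> {0..1} \<or> y \<notin> {0..1} \<longrightarrow> K x y = 0)"

definition Op :: "(real \<Rightarrow> real \<Rightarrow> real) \<Rightarrow> (real \<Rightarrow> real) \<Rightarrow> real \<Rightarrow> real" where
  "Op K f = (\<lambda>x. \<integral>y. K x y * f y \<partial>lborel)"

lemma kernD: assumes "kern K"
  shows "case_prod K \<in> borel_measurable (lborel \<Otimes>\<^sub>M lborel)" "\<And>x y. \<bar>K x y\<bar> \<le> 1"
    "\<And>x y. x \<notin> {0..1} \<Longrightarrow> K x y = 0" "\<And>x y. y \<notin> {0..1} \<Longrightarrow> K x y = 0"
  using assms unfolding kern_def by auto

lemma kern_meas2: assumes "kern K" shows "K x \<in> borel_measurable lborel"
proof -
  have "(\<lambda>y. case_prod K (x, y)) \<in> borel_measurable lborel"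
    using kernD(1)[OF assms] by measurable
  then show ?thesis by simp
qed

lemma Op_integrable:
  assumes "kern K" "L2 f"
  shows "integrable lborel (\<lambda>y. K x y * f y)"
proof (rule Bochner_Integration.integrable_bound[of _ "\<lambda>y. \<bar>f y\<bar>"])
  show "integrable lborel (\<lambda>y. \<bar>f y\<bar>)" using L2_integrable[OF assms(2)] by simp
  show "(\<lambda>y. K x y * f y) \<in> borel_measurable lborel"
    using kern_meas2[OF assms(1)] L2D(1)[OF assms(2)] by measurable
  show "AE y in lborel. norm (K x y * f y) \<le> norm \<bar>f y\<bar>"
    using kernD(2)[OF assms(1)] by (intro AE_I2) (simp add: abs_mult mult_left_le_one_le)
qed

lemma Op_bound:
  assumes "kern K" "L2 f"
  shows "\<bar>Op K f x\<bar> \<le> nrm f"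
proof -
  have "\<bar>Op K f x\<bar> \<le> (\<integral>y. \<bar>K x y * f y\<bar> \<partial>lborel)"
    unfolding Op_def by (rule integral_abs_bound)
  also have "\<dots> \<le> (\<integral>y. \<bar>f y\<bar> \<partial>lborel)"
    using Op_integrable[OF assms] L2_integrable[OF assms(2)] kernD(2)[OF assms(1)]
    by (intro Bochner_Integration.integral_mono integrable_abs) (simp_all add: abs_mult mult_left_le_one_le)
  also have "\<dots> \<le> nrm f" by (rule ip_ind_abs[OF assms(2)])
  finally show ?thesis .
qed

lemma Op_out: "kern K \<Longrightarrow> x \<notin> {0..1} \<Longrightarrow> Op K f x = 0"
  unfolding Op_def by (simp add: kernD(3))

lemma Op_meas:
  assumes "kern K" "L2 f"
  shows "Op K f \<in> borel_measurable lborel"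
proof -
  have [measurable]: "case_prod K \<in> borel_measurable (lborel \<Otimes>\<^sub>M lborel)" by (rule kernD(1)[OF assms(1)])
  have [measurable]: "f \<in> borel_measurable lborel" by (rule L2D(1)[OF assms(2)])
  have "case_prod (\<lambda>x y. K x y * f y) \<in> borel_measurable (lborel \<Otimes>\<^sub>M lborel)"
    by measurable
  then show ?thesis unfolding Op_def by (rule lborel.borel_measurable_lebesgue_integral)
qed

lemma Op_L2:
  assumes "kern K" "L2 f"
  shows "L2 (Op K f)"
proof -
  have m: "Op K f \<in> borel_measurable lborel" by (rule Op_meas[OF assms])
  have "integrable lborel (\<lambda>x. (Op K f x)\<^sup>2)"
  proof (rule Bochner_Integration.integrable_bound[of _ "\<lambda>x. (nrm f)\<^sup>2 * indicator {0..1} x"])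
    show "integrable lborel (\<lambda>x. (nrm f)\<^sup>2 * indicator {0..1::real} x)" by (rule integrable_mult_right) (rule int_ind)
    show "(\<lambda>x. (Op K f x)\<^sup>2) \<in> borel_measurable lborel" using m by measurable
    show "AE x in lborel. norm ((Op K f x)\<^sup>2) \<le> norm ((nrm f)\<^sup>2 * indicator {0..1::real} x)"
    proof (rule AE_I2)
      fix x
      show "norm ((Op K f x)\<^sup>2) \<le> norm ((nrm f)\<^sup>2 * indicator {0..1::real} x)"
      proof (cases "x \<in> {0..1}")
        case True
        have "\<bar>Op K f x\<bar>\<^sup>2 \<le> (nrm f)\<^sup>2"
          using Op_bound[OF assms, of x] by (intro power_mono) auto
        then show ?thesis using True by simp
      next
        case False then show ?thesis using Op_out[OF assms(1)] by simp
      qed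
    qed
  qed
  then show ?thesis using m Op_out[OF assms(1)] unfolding L2_def by auto
qed

lemma Op_lin:
  assumes "kern K" "L2 f" "L2 g"
  shows "Op K (\<lambda>x. c * f x + d * g x) = (\<lambda>x. c * Op K f x + d * Op K g x)"
proof
  fix x
  have "Op K (\<lambda>x. c * f x + d * g x) x = (\<integral>y. c * (K x y * f y) + d * (K x y * g y) \<partial>lborel)"
    unfolding Op_def by (simp add: algebra_simps)
  also have "\<dots> = c * Op K f x + d * Op K g x"
    unfolding Op_def using Op_integrable[OF assms(1,2)] Op_integrable[OF assms(1,3)] by simp
  finally show "Op K (\<lambda>x. c * f x + d * g x) x = c * Op K f x + d * Op K g x" .
qed

lemma Op_nrm:
  assumes "kern K" "L2 f"
  shows "nrm (Op K f) \<le> nrm f"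
proof -
  have i1: "integrable lborel (\<lambda>x. Op K f x * Op K f x)"
    using L2_integrable_mult[OF Op_L2[OF assms] Op_L2[OF assms]] .
  have i2: "integrable lborel (\<lambda>x. (nrm f)\<^sup>2 * indicator {0..1::real} x)"
    by (rule integrable_mult_right) (rule int_ind)
  have pt: "Op K f x * Op K f x \<le> (nrm f)\<^sup>2 * indicator {0..1::real} x" for x
  proof (cases "x \<in> {0..1}")
    case True
    have "\<bar>Op K f x\<bar>\<^sup>2 \<le> (nrm f)\<^sup>2"
      using Op_bound[OF assms, of x] by (intro power_mono) auto
    then show ?thesis using True by (simp add: power2_eq_square)
  next
    case False then show ?thesis using Op_out[OF assms(1)] by simp
  qed
  have "ip (Op K f) (Op K f) \<le> (\<integral>x. (nrm f)\<^sup>2 * indicator {0..1::real} x \<partial>lborel)"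
    unfolding ip_def using i1 i2 pt by (intro Bochner_Integration.integral_mono) auto
  also have "\<dots> = (nrm f)\<^sup>2" by simp
  finally have "(nrm (Op K f))\<^sup>2 \<le> (nrm f)\<^sup>2" by (simp add: nrm_sq)
  then show ?thesis using nrm_nonneg[of f] by (rule power2_le_imp_le)
qed

lemma Op_cong:
  assumes "kern K" "L2 f" "L2 g" "nrm (\<lambda>x. f x - g x) = 0"
  shows "Op K f = Op K g"
proof
  fix x
  have "Op K (\<lambda>x. 1 * f x + (-1) * g x) x = Op K f x - Op K g x"
    using Op_lin[OF assms(1-3), of 1 "-1"] by simp
  moreover have "\<bar>Op K (\<lambda>x. 1 * f x + (-1) * g x) x\<bar> \<le> 0"
    using Op_bound[OF assms(1), of "\<lambda>x. 1 * f x + (-1) * g x" x] assms by auto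
  ultimately show "Op K f x = Op K g x" by simp
qed

lemma Op_sa:
  assumes "kern K" "L2 f" "L2 g" and sym: "\<And>x y. K x y = K y x"
  shows "ip (Op K f) g = ip f (Op K g)"
proof -
  have [measurable]: "case_prod K \<in> borel_measurable (lborel \<Otimes>\<^sub>M lborel)" by (rule kernD(1)[OF assms(1)])
  have [measurable]: "f \<in> borel_measurable lborel" by (rule L2D(1)[OF assms(2)])
  have [measurable]: "g \<in> borel_measurable lborel" by (rule L2D(1)[OF assms(3)])
  define F where "F = (\<lambda>x y. K x y * f y * g x)"
  have Fm[measurable]: "case_prod F \<in> borel_measurable (lborel \<Otimes>\<^sub>M lborel)"
    unfolding F_def by measurable
  have intF: "integrable (lborel \<Otimes>\<^sub>M lborel) (case_prod F)"
  proof (rule lborel_pair.Fubini_integrable)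
    show "case_prod F \<in> borel_measurable (lborel \<Otimes>\<^sub>M lborel)" by (rule Fm)
    show "AE x in lborel. integrable lborel (\<lambda>y. case_prod F (x, y))"
      unfolding F_def using Op_integrable[OF assms(1,2)] by auto
    show "integrable lborel (\<lambda>x. \<integral>y. norm (case_prod F (x, y)) \<partial>lborel)"
    proof (rule Bochner_Integration.integrable_bound[of _ "\<lambda>x. nrm f * \<bar>g x\<bar>"])
      show "integrable lborel (\<lambda>x. nrm f * \<bar>g x\<bar>)" using L2_integrable[OF assms(3)] by simp
      show "(\<lambda>x. \<integral>y. norm (case_prod F (x, y)) \<partial>lborel) \<in> borel_measurable lborel"
        by measurable
      show "AE x in lborel. norm (\<integral>y. norm (case_prod F (x, y)) \<partial>lborel) \<le> norm (nrm f * \<bar>g x\<bar>)"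
      proof (rule AE_I2)
        fix x
        have "(\<integral>y. norm (case_prod F (x, y)) \<partial>lborel) = (\<integral>y. \<bar>K x y * f y\<bar> \<partial>lborel) * \<bar>g x\<bar>"
          unfolding F_def by (simp add: abs_mult)
        also have "\<dots> \<le> nrm f * \<bar>g x\<bar>"
        proof (rule mult_right_mono)
          have "(\<integral>y. \<bar>K x y * f y\<bar> \<partial>lborel) \<le> (\<integral>y. \<bar>f y\<bar> \<partial>lborel)"
            using Op_integrable[OF assms(1,2)] L2_integrable[OF assms(2)] kernD(2)[OF assms(1)]
            by (intro Bochner_Integration.integral_mono integrable_abs) (simp_all add: abs_mult mult_left_le_one_le)
          also have "\<dots> \<le> nrm f" by (rule ip_ind_abs[OF assms(2)])
          finally show "(\<integral>y. \<bar>K x y * f y\<bar> \<partial>lborel) \<le> nrm f" .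
        qed simp
        finally show "norm (\<integral>y. norm (case_prod F (x, y)) \<partial>lborel) \<le> norm (nrm f * \<bar>g x\<bar>)"
          using nrm_nonneg[of f] by (simp add: abs_mult)
      qed
    qed
  qed
  have "ip (Op K f) g = (\<integral>x. (\<integral>y. F x y \<partial>lborel) \<partial>lborel)"
    unfolding ip_def Op_def F_def by simp
  also have "\<dots> = (\<integral>y. (\<integral>x. F x y \<partial>lborel) \<partial>lborel)"
    by (rule lborel_pair.Fubini_integral[OF intF, symmetric])
  also have "\<dots> = ip f (Op K g)"
    unfolding ip_def Op_def F_def by (simp add: sym mult.commute mult.left_commute)
  finally show ?thesis .
qed

lemma nrm_lin3:
  assumes "L2 f" "L2 g" "L2 h"
  shows "nrm (\<lambda>x. a * f x + b * g x + c * h x) \<le> \<bar>a\<bar> * nrm f + \<bar>b\<bar> * nrm g + \<bar>c\<bar> * nrm h"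
proof -
  have "nrm (\<lambda>x. 1 * (a * f x + b * g x) + c * h x) \<le> \<bar>1\<bar> * nrm (\<lambda>x. a * f x + b * g x) + \<bar>c\<bar> * nrm h"
    using assms by (intro nrm_lin) auto
  also have "\<dots> \<le> \<bar>a\<bar> * nrm f + \<bar>b\<bar> * nrm g + \<bar>c\<bar> * nrm h"
    using nrm_lin[OF assms(1,2), of a b] by simp
  finally show ?thesis by simp
qed

lemma eigen_exists:
  fixes A :: "(real \<Rightarrow> real) \<Rightarrow> real \<Rightarrow> real" and V :: "(real \<Rightarrow> real) set" and C :: real
  assumes VL2: "\<And>f. f \<in> V \<Longrightarrow> L2 f"
  and Vlin: "\<And>f g c d. f \<in> V \<Longrightarrow> g \<in> V \<Longrightarrow> (\<lambda>x. c * f x + d * g x) \<in> V"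
  and AV: "\<And>f. f \<in> V \<Longrightarrow> A f \<in> V"
  and Alin: "\<And>f g c d. f \<in> V \<Longrightarrow> g \<in> V \<Longrightarrow> A (\<lambda>x. c * f x + d * g x) = (\<lambda>x. c * A f x + d * A g x)"
  and Asa: "\<And>f g. f \<in> V \<Longrightarrow> g \<in> V \<Longrightarrow> ip (A f) g = ip f (A g)"
  and Abd: "\<And>f. f \<in> V \<Longrightarrow> nrm (A f) \<le> C * nrm f"
  and Acpt: "\<And>F :: nat \<Rightarrow> real \<Rightarrow> real. (\<And>n. F n \<in> V) \<Longrightarrow> (\<And>n. nrm (F n) \<le> 1) \<Longrightarrow>
      \<exists>r h. strict_mono r \<and> L2 h \<and> (\<lambda>n. nrm (\<lambda>x. A (F (r n)) x - h x)) \<longlonglongrightarrow> 0"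
  and Vcl: "\<And>(F :: nat \<Rightarrow> real \<Rightarrow> real) h. (\<And>n. F n \<in> V) \<Longrightarrow> L2 h \<Longrightarrow> (\<lambda>n. nrm (\<lambda>x. F n x - h x)) \<longlonglongrightarrow> 0 \<Longrightarrow> h \<in> V"
  and f0: "f0 \<in> V" "nrm (A f0) > 0"
  shows "\<exists>h \<nu>. h \<in> V \<and> \<nu> \<noteq> 0 \<and> nrm h > 0 \<and> nrm (\<lambda>x. A h x - \<nu> * h x) = 0"
proof -
  have scale: "(\<lambda>x. c * f x) \<in> V" if "f \<in> V" for f c
    using Vlin[OF that that, of c 0] by simp
  have Ascale: "A (\<lambda>x. c * f x) = (\<lambda>x. c * A f x)" if "f \<in> V" for f c
    using Alin[OF that that, of c 0] by simp
  have nf0: "nrm f0 > 0"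
  proof (rule ccontr)
    assume "\<not> nrm f0 > 0"
    then have "nrm f0 = 0" using nrm_nonneg[of f0] by simp
    then show False using Abd[OF f0(1)] f0(2) by simp
  qed
  have Cpos: "C > 0"
    using Abd[OF f0(1)] f0(2) nf0 by (metis less_le_trans mult_nonpos_nonneg not_less nrm_nonneg)
  define S where "S = {nrm (A f) | f. f \<in> V \<and> nrm f \<le> 1}"
  define t where "t = Sup S"
  have S_bdd: "bdd_above S"
  proof
    fix y assume "y \<in> S"
    then obtain f where f: "f \<in> V" "nrm f \<le> 1" "y = nrm (A f)" unfolding S_def by blast
    have "nrm (A f) \<le> C * nrm f" by (rule Abd[OF f(1)])
    also have "\<dots> \<le> C * 1" using f(2) Cpos by (intro mult_left_mono) auto
    finally show "y \<le> C" using f by simp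
  qed
  have S_ne: "S \<noteq> {}"
  proof -
    have "nrm (A (\<lambda>x. 0 * f0 x)) \<in> S"
      unfolding S_def using nrm_scale[of 0 f0] scale[OF f0(1), of 0] by fastforce
    then show ?thesis by blast
  qed
  have t_upper: "nrm (A f) \<le> t" if "f \<in> V" "nrm f \<le> 1" for f
    unfolding t_def by (rule cSup_upper[OF _ S_bdd]) (use that in \<open>auto simp: S_def\<close>)
  define g0 where "g0 = (\<lambda>x. (1 / nrm f0) * f0 x)"
  have g0V: "g0 \<in> V" unfolding g0_def by (rule scale[OF f0(1)])
  have "nrm g0 = 1" unfolding g0_def nrm_scale using nf0 by simp
  have "nrm (A g0) = nrm (A f0) / nrm f0"
    unfolding g0_def Ascale[OF f0(1)] nrm_scale using nf0 by simp
  then have "nrm (A g0) > 0" using f0(2) nf0 by simp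
  then have tpos: "t > 0" using t_upper[OF g0V] \<open>nrm g0 = 1\<close> by fastforce
  have bound_t: "nrm (A f) \<le> t * nrm f" if "f \<in> V" for f
  proof (cases "nrm f = 0")
    case True then show ?thesis using Abd[OF that] by simp
  next
    case False
    then have nf: "nrm f > 0" using nrm_nonneg[of f] by simp
    have "nrm (\<lambda>x. (1 / nrm f) * f x) = 1"
      unfolding nrm_scale using nf by simp
    then have "nrm (A (\<lambda>x. (1 / nrm f) * f x)) \<le> t"
      by (rule t_upper[OF scale[OF that] eq_refl])
    then have "nrm (A f) / nrm f \<le> t" unfolding Ascale[OF that] nrm_scale using nf by simp
    then show ?thesis using nf by (simp add: field_simps)
  qed
  have approx: "\<exists>f. f \<in> V \<and> nrm f \<le> 1 \<and> t - inverse (real (Suc n)) < nrm (A f)" for n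
  proof -
    have "t - inverse (real (Suc n)) < Sup S" unfolding t_def[symmetric] by simp
    then obtain y where "y \<in> S" "t - inverse (real (Suc n)) < y"
      using less_cSup_iff[OF S_ne S_bdd] by blast
    then show ?thesis unfolding S_def by blast
  qed
  obtain F where F: "\<And>n. F n \<in> V" "\<And>n. nrm (F n) \<le> 1" "\<And>n. t - inverse (real (Suc n)) < nrm (A (F n))"
    using approx by metis
  define a where "a = (\<lambda>n. nrm (A (F n)))"
  have a_le: "a n \<le> t" for n unfolding a_def using t_upper[OF F(1) F(2)] .
  have a_ge: "t - inverse (real (Suc n)) < a n" for n unfolding a_def using F(3) .
  have a_lim: "a \<longlonglongrightarrow> t"
  proof (rule tendsto_sandwich[of "\<lambda>n. t + - inverse (real (Suc n))" _ _ "\<lambda>n. t"])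
    show "\<forall>\<^sub>F n in sequentially. t + - inverse (real (Suc n)) \<le> a n"
    proof (rule always_eventually, rule allI)
      fix n show "t + - inverse (real (Suc n)) \<le> a n" using a_ge[of n] by simp
    qed
    show "\<forall>\<^sub>F n in sequentially. a n \<le> t" using a_le by simp
    show "(\<lambda>n. t + - inverse (real (Suc n))) \<longlonglongrightarrow> t" by (rule LIMSEQ_inverse_real_of_nat_add_minus)
  qed simp
  define AA where "AA = (\<lambda>n. A (A (F n)))"
  have AF_V: "A (F n) \<in> V" for n using AV[OF F(1)] .
  have AA_V: "AA n \<in> V" for n unfolding AA_def using AV[OF AF_V] .
  have L2F: "L2 (F n)" for n using VL2[OF F(1)] .
  have L2AF: "L2 (A (F n))" for n using VL2[OF AF_V] .
  have L2AA: "L2 (AA n)" for n using VL2[OF AA_V] .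
  have e_bound: "nrm (\<lambda>x. AA n x - t\<^sup>2 * F n x) \<le> t * sqrt (t\<^sup>2 - (a n)\<^sup>2)" for n
  proof -
    have E1: "(nrm (\<lambda>x. AA n x - t\<^sup>2 * F n x))\<^sup>2 = ip (AA n) (AA n) - 2 * t\<^sup>2 * ip (AA n) (F n) + (t\<^sup>2)\<^sup>2 * ip (F n) (F n)"
      unfolding nrm_sq by (rule ip_diff_self[OF L2AA L2F])
    have E2: "ip (AA n) (F n) = (a n)\<^sup>2"
      unfolding AA_def a_def nrm_sq using Asa[OF AF_V F(1)] by simp
    have E3: "ip (AA n) (AA n) \<le> (t * a n)\<^sup>2"
    proof -
      have "nrm (AA n) \<le> t * a n" unfolding AA_def a_def by (rule bound_t[OF AF_V])
      then have "(nrm (AA n))\<^sup>2 \<le> (t * a n)\<^sup>2" using nrm_nonneg by (intro power_mono) auto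
      then show ?thesis by (simp add: nrm_sq)
    qed
    have E4: "ip (F n) (F n) \<le> 1"
    proof -
      have "(nrm (F n))\<^sup>2 \<le> 1\<^sup>2" using F(2) nrm_nonneg by (intro power_mono) auto
      then show ?thesis by (simp add: nrm_sq)
    qed
    have E5: "(t\<^sup>2)\<^sup>2 * ip (F n) (F n) \<le> (t\<^sup>2)\<^sup>2"
      using E4 mult_left_mono[OF E4, of "(t\<^sup>2)\<^sup>2"] by simp
    have E6: "(nrm (\<lambda>x. AA n x - t\<^sup>2 * F n x))\<^sup>2 \<le> (t * a n)\<^sup>2 - 2 * t\<^sup>2 * (a n)\<^sup>2 + (t\<^sup>2)\<^sup>2"
      unfolding E1 E2 using E3 E5 by linarith
    have X: "0 \<le> t\<^sup>2 - (a n)\<^sup>2"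
    proof -
      have "(a n)\<^sup>2 \<le> t\<^sup>2"
        using a_le[of n] by (intro power_mono) (auto simp: a_def nrm_nonneg)
      then show ?thesis by simp
    qed
    have E7: "(t * sqrt (t\<^sup>2 - (a n)\<^sup>2))\<^sup>2 = t\<^sup>2 * (t\<^sup>2 - (a n)\<^sup>2)"
      using X by (simp add: power_mult_distrib)
    have E8: "(t * a n)\<^sup>2 - 2 * t\<^sup>2 * (a n)\<^sup>2 + (t\<^sup>2)\<^sup>2 = t\<^sup>2 * (t\<^sup>2 - (a n)\<^sup>2)"
      by (simp add: power_mult_distrib right_diff_distrib power2_eq_square)
    have "(nrm (\<lambda>x. AA n x - t\<^sup>2 * F n x))\<^sup>2 \<le> (t * sqrt (t\<^sup>2 - (a n)\<^sup>2))\<^sup>2"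
      using E6 E7 E8 by simp
    moreover have "0 \<le> t * sqrt (t\<^sup>2 - (a n)\<^sup>2)" using tpos X by simp
    ultimately show ?thesis by (rule power2_le_imp_le)
  qed
  have e_lim: "(\<lambda>n. nrm (\<lambda>x. AA n x - t\<^sup>2 * F n x)) \<longlonglongrightarrow> 0"
  proof (rule tendsto_sandwich[of "\<lambda>n. 0" _ _ "\<lambda>n. t * sqrt (t\<^sup>2 - (a n)\<^sup>2)"])
    show "\<forall>\<^sub>F n in sequentially. 0 \<le> nrm (\<lambda>x. AA n x - t\<^sup>2 * F n x)" by (simp add: nrm_nonneg)
    show "\<forall>\<^sub>F n in sequentially. nrm (\<lambda>x. AA n x - t\<^sup>2 * F n x) \<le> t * sqrt (t\<^sup>2 - (a n)\<^sup>2)"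
      using e_bound by simp
    have "(\<lambda>n. t * sqrt (t\<^sup>2 - (a n)\<^sup>2)) \<longlonglongrightarrow> t * sqrt (t\<^sup>2 - t\<^sup>2)"
      by (intro tendsto_intros a_lim)
    then show "(\<lambda>n. t * sqrt (t\<^sup>2 - (a n)\<^sup>2)) \<longlonglongrightarrow> 0" by simp
  qed simp
  define G where "G = (\<lambda>n x. (1 / t) * A (F n) x)"
  have GV: "G n \<in> V" for n unfolding G_def by (rule scale[OF AF_V])
  have Gn: "nrm (G n) \<le> 1" for n
    unfolding G_def nrm_scale using a_le[of n] tpos by (simp add: a_def)
  obtain r h0 where r: "strict_mono r" and h0: "L2 h0"
    and lim0: "(\<lambda>n. nrm (\<lambda>x. A (G (r n)) x - h0 x)) \<longlonglongrightarrow> 0"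
    using Acpt[of G, OF GV Gn] by blast
  define h where "h = (\<lambda>x. t * h0 x)"
  have L2h: "L2 h" unfolding h_def using h0 by auto
  have AG: "A (G n) = (\<lambda>x. (1 / t) * AA n x)" for n
    unfolding G_def AA_def by (rule Ascale[OF AF_V])
  have lim1: "(\<lambda>n. nrm (\<lambda>x. AA (r n) x - h x)) \<longlonglongrightarrow> 0"
  proof -
    have "nrm (\<lambda>x. AA (r n) x - h x) = t * nrm (\<lambda>x. A (G (r n)) x - h0 x)" for n
    proof -
      have "(\<lambda>x. AA (r n) x - h x) = (\<lambda>x. t * (A (G (r n)) x - h0 x))"
        unfolding AG h_def using tpos by (auto simp: field_simps)
      then show ?thesis using nrm_scale[of t] tpos by simp
    qed
    then show ?thesis using tendsto_mult[OF tendsto_const[of t] lim0] by simp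
  qed
  have lim2: "(\<lambda>n. nrm (\<lambda>x. t\<^sup>2 * F (r n) x - h x)) \<longlonglongrightarrow> 0"
  proof (rule tendsto_sandwich[of "\<lambda>n. 0" _ _ "\<lambda>n. nrm (\<lambda>x. AA (r n) x - t\<^sup>2 * F (r n) x) + nrm (\<lambda>x. AA (r n) x - h x)"])
    show "\<forall>\<^sub>F n in sequentially. 0 \<le> nrm (\<lambda>x. t\<^sup>2 * F (r n) x - h x)" by (simp add: nrm_nonneg)
    show "\<forall>\<^sub>F n in sequentially. nrm (\<lambda>x. t\<^sup>2 * F (r n) x - h x)
      \<le> nrm (\<lambda>x. AA (r n) x - t\<^sup>2 * F (r n) x) + nrm (\<lambda>x. AA (r n) x - h x)"
    proof (rule always_eventually, rule allI)
      fix n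
      have "nrm (\<lambda>x. t\<^sup>2 * F (r n) x - h x) \<le> nrm (\<lambda>x. t\<^sup>2 * F (r n) x - AA (r n) x) + nrm (\<lambda>x. AA (r n) x - h x)"
        using L2F L2AA L2h by (intro nrm_tri) auto
      then show "nrm (\<lambda>x. t\<^sup>2 * F (r n) x - h x)
      \<le> nrm (\<lambda>x. AA (r n) x - t\<^sup>2 * F (r n) x) + nrm (\<lambda>x. AA (r n) x - h x)"
        using nrm_minus_comm[of "\<lambda>x. t\<^sup>2 * F (r n) x" "AA (r n)"] by simp
    qed
    have "(\<lambda>n. nrm (\<lambda>x. AA (r n) x - t\<^sup>2 * F (r n) x)) \<longlonglongrightarrow> 0"
      using LIMSEQ_subseq_LIMSEQ[OF e_lim r] by (simp add: o_def)
    then show "(\<lambda>n. nrm (\<lambda>x. AA (r n) x - t\<^sup>2 * F (r n) x) + nrm (\<lambda>x. AA (r n) x - h x)) \<longlonglongrightarrow> 0"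
      using tendsto_add[OF _ lim1] by simp
  qed simp
  have hV: "h \<in> V"
    by (rule Vcl[OF _ L2h lim2]) (rule scale[OF F(1)])
  have nh: "t\<^sup>2 \<le> nrm h"
  proof (rule LIMSEQ_le_const2)
    have "(\<lambda>n. (a (r n))\<^sup>2 - nrm (\<lambda>x. AA (r n) x - h x)) \<longlonglongrightarrow> t\<^sup>2 - 0"
      using LIMSEQ_subseq_LIMSEQ[OF a_lim r] lim1 by (intro tendsto_intros) (auto simp: o_def)
    then show "(\<lambda>n. (a (r n))\<^sup>2 - nrm (\<lambda>x. AA (r n) x - h x)) \<longlonglongrightarrow> t\<^sup>2" by simp
    show "\<exists>N. \<forall>n\<ge>N. (a (r n))\<^sup>2 - nrm (\<lambda>x. AA (r n) x - h x) \<le> nrm h"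
    proof (intro exI allI impI)
      fix n :: nat
      have "(a (r n))\<^sup>2 = ip (AA (r n)) (F (r n))"
        unfolding AA_def a_def nrm_sq using Asa[OF AF_V F(1)] by simp
      also have "\<dots> \<le> nrm (AA (r n)) * nrm (F (r n))"
        using cauchy_schwarz[OF L2AA[of "r n"] L2F[of "r n"]] by (meson abs_ge_self order_trans)
      also have "\<dots> \<le> nrm (AA (r n))"
        using F(2) nrm_nonneg by (simp add: mult_left_le)
      also have "\<dots> \<le> nrm (\<lambda>x. AA (r n) x - h x) + nrm h"
        using nrm_add[of "\<lambda>x. AA (r n) x - h x" h] L2AA L2h by auto
      finally show "(a (r n))\<^sup>2 - nrm (\<lambda>x. AA (r n) x - h x) \<le> nrm h" by simp
    qed
  qed
  have hpos: "nrm h > 0" using nh tpos by (metis less_le_trans zero_less_power)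
  have AhV: "A h \<in> V" using AV[OF hV] .
  have AAhV: "A (A h) \<in> V" using AV[OF AhV] .
  have eig2: "nrm (\<lambda>x. A (A h) x - t\<^sup>2 * h x) = 0"
  proof -
    have le: "nrm (\<lambda>x. A (A h) x - t\<^sup>2 * h x) \<le>
        2 * t\<^sup>2 * nrm (\<lambda>x. t\<^sup>2 * F (r n) x - h x) + t\<^sup>2 * nrm (\<lambda>x. AA (r n) x - t\<^sup>2 * F (r n) x)" for n
    proof -
      define d where "d = (\<lambda>x. h x - t\<^sup>2 * F (r n) x)"
      have dV: "d \<in> V" unfolding d_def using Vlin[OF hV F(1), of 1 "- t\<^sup>2" ] by simp
      have Ad: "A d = (\<lambda>x. A h x - t\<^sup>2 * A (F (r n)) x)"
        unfolding d_def using Alin[OF hV F(1), of 1 "- t\<^sup>2"] by simp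
      have AAd: "A (A d) = (\<lambda>x. A (A h) x - t\<^sup>2 * AA (r n) x)"
        unfolding Ad AA_def using Alin[OF AhV AF_V, of 1 "- t\<^sup>2"] by simp
      have eq: "(\<lambda>x. A (A h) x - t\<^sup>2 * h x) =
          (\<lambda>x. 1 * A (A d) x + t\<^sup>2 * (AA (r n) x - t\<^sup>2 * F (r n) x) + (- t\<^sup>2) * d x)"
        by (simp only: AAd) (auto simp: d_def algebra_simps)
      have L2d: "L2 d" using VL2[OF dV] .
      have "nrm (\<lambda>x. A (A h) x - t\<^sup>2 * h x) \<le>
          \<bar>1\<bar> * nrm (A (A d)) + \<bar>t\<^sup>2\<bar> * nrm (\<lambda>x. AA (r n) x - t\<^sup>2 * F (r n) x) + \<bar>- t\<^sup>2\<bar> * nrm d"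
        unfolding eq by (rule nrm_lin3[OF VL2[OF AV[OF AV[OF dV]]] L2_diff[OF L2AA L2_scale[OF L2F]] L2d])
      also have "nrm (A (A d)) \<le> t\<^sup>2 * nrm d"
      proof -
        have "nrm (A (A d)) \<le> t * nrm (A d)" by (rule bound_t[OF AV[OF dV]])
        also have "\<dots> \<le> t * (t * nrm d)" using bound_t[OF dV] tpos by (intro mult_left_mono) auto
        finally show ?thesis by (simp add: power2_eq_square)
      qed
      also have "nrm d = nrm (\<lambda>x. t\<^sup>2 * F (r n) x - h x)"
        unfolding d_def by (rule nrm_minus_comm)
      finally show ?thesis by simp
    qed
    have "(\<lambda>n. 2 * t\<^sup>2 * nrm (\<lambda>x. t\<^sup>2 * F (r n) x - h x) + t\<^sup>2 * nrm (\<lambda>x. AA (r n) x - t\<^sup>2 * F (r n) x))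
        \<longlonglongrightarrow> 2 * t\<^sup>2 * 0 + t\<^sup>2 * 0"
      using lim2 LIMSEQ_subseq_LIMSEQ[OF e_lim r] by (intro tendsto_intros) (auto simp: o_def)
    then have "nrm (\<lambda>x. A (A h) x - t\<^sup>2 * h x) \<le> 0"
      by (intro LIMSEQ_le_const2[where a=0, OF _ ] ) (use le in \<open>auto intro!: LIMSEQ_le_const[where a = "nrm (\<lambda>x. A (A h) x - t\<^sup>2 * h x)"]\<close>)
    then show ?thesis using nrm_nonneg by (metis antisym)
  qed
  define u where "u = (\<lambda>x. A h x + t * h x)"
  have uV: "u \<in> V" unfolding u_def using Vlin[OF AhV hV, of 1 t] by simp
  have Au: "A u = (\<lambda>x. A (A h) x + t * A h x)"
    unfolding u_def using Alin[OF AhV hV, of 1 t] by simp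
  show ?thesis
  proof (cases "nrm u > 0")
    case True
    have "(\<lambda>x. A u x - t * u x) = (\<lambda>x. A (A h) x - t\<^sup>2 * h x)"
      by (simp only: Au) (auto simp: u_def algebra_simps power2_eq_square)
    then show ?thesis using True uV tpos eig2 by (intro exI[of _ u] exI[of _ t]) auto
  next
    case False
    then have "nrm u = 0" using nrm_nonneg[of u] by simp
    moreover have "(\<lambda>x. A h x - (- t) * h x) = u" unfolding u_def by auto
    ultimately show ?thesis using hV hpos tpos by (intro exI[of _ h] exI[of _ "-t"]) auto
  qed
qed

lemma powr_small:
  fixes C \<beta> e :: real
  assumes "\<beta> > 0" "C \<ge> 0" "e > 0"
  shows "\<exists>d>0. \<forall>z. 0 \<le> z \<and> z < d \<longrightarrow> C * z powr \<beta> < e"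
proof (intro exI[of _ "(e / (C + 1)) powr (1 / \<beta>)"] conjI allI impI)
  show "0 < (e / (C + 1)) powr (1 / \<beta>)" using assms by simp
  fix z :: real assume z: "0 \<le> z \<and> z < (e / (C + 1)) powr (1 / \<beta>)"
  have "z powr \<beta> \<le> ((e / (C + 1)) powr (1 / \<beta>)) powr \<beta>"
    using z assms by (intro powr_mono2) auto
  also have "\<dots> = e / (C + 1)" using assms by (simp add: powr_powr)
  finally have "C * z powr \<beta> \<le> C * (e / (C + 1))" using assms by (intro mult_left_mono) auto
  also have "\<dots> < e" using assms by (simp add: field_simps)
  finally show "C * z powr \<beta> < e" .
qed

lemma holder_ext:
  fixes g :: "real \<Rightarrow> real" and Q :: "real set"
  assumes \<beta>: "\<beta> > 0" and C: "C \<ge> 0"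
  and hol: "\<And>x y. x \<in> Q \<Longrightarrow> y \<in> Q \<Longrightarrow> \<bar>g x - g y\<bar> \<le> C * \<bar>x - y\<bar> powr \<beta>"
  and bd: "\<And>x. x \<in> Q \<Longrightarrow> \<bar>g x\<bar> \<le> B"
  shows "\<exists>g'. (\<forall>x\<in>Q. g' x = g x) \<and>
    (\<forall>x\<in>closure Q. \<forall>y\<in>closure Q. \<bar>g' x - g' y\<bar> \<le> C * \<bar>x - y\<bar> powr \<beta>) \<and>
    (\<forall>x\<in>closure Q. \<bar>g' x\<bar> \<le> B)"
proof -
  have uc: "uniformly_continuous_on Q g"
    unfolding uniformly_continuous_on_def dist_real_def
  proof (intro allI impI)
    fix e :: real assume e: "e > 0"
    obtain d where d: "d > 0" "\<And>z. 0 \<le> z \<Longrightarrow> z < d \<Longrightarrow> C * z powr \<beta> < e"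
      using powr_small[OF \<beta> C e] by blast
    show "\<exists>d>0. \<forall>x\<in>Q. \<forall>x'\<in>Q. \<bar>x' - x\<bar> < d \<longrightarrow> \<bar>g x' - g x\<bar> < e"
      using d hol by (meson abs_ge_zero le_less_trans)
  qed
  obtain g' where g'uc: "uniformly_continuous_on (closure Q) g'" and g'eq: "\<And>x. x \<in> Q \<Longrightarrow> g x = g' x"
    by (rule uniformly_continuous_on_extension_on_closure[OF uc]) blast
  have cont: "continuous_on (closure Q) g'" using g'uc by (rule uniformly_continuous_imp_continuous)
  have c1: "continuous_on (closure Q \<times> closure Q) (\<lambda>p. g' (fst p))"
    by (rule continuous_on_compose2[OF cont continuous_on_fst]) auto
  have c2: "continuous_on (closure Q \<times> closure Q) (\<lambda>p. g' (snd p))"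
    by (rule continuous_on_compose2[OF cont continuous_on_snd]) auto
  have c3: "continuous_on (closure Q \<times> closure Q) (\<lambda>p. \<bar>fst p - snd p\<bar> powr \<beta>)"
    by (rule continuous_on_powr') (use \<beta> in \<open>auto intro!: continuous_intros\<close>)
  have cphi: "continuous_on (closure (Q \<times> Q)) (\<lambda>p. \<bar>g' (fst p) - g' (snd p)\<bar> - C * \<bar>fst p - snd p\<bar> powr \<beta>)"
    unfolding closure_Times
    by (rule continuous_on_diff[OF continuous_on_rabs[OF continuous_on_diff[OF c1 c2]] continuous_on_mult[OF continuous_on_const c3]])
  have H: "\<bar>g' x - g' y\<bar> \<le> C * \<bar>x - y\<bar> powr \<beta>" if "x \<in> closure Q" "y \<in> closure Q" for x y
  proof -
    have "(\<lambda>p. \<bar>g' (fst p) - g' (snd p)\<bar> - C * \<bar>fst p - snd p\<bar> powr \<beta>) (x, y) \<le> 0"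
    proof (rule continuous_le_on_closure[OF cphi])
      show "(x, y) \<in> closure (Q \<times> Q)" unfolding closure_Times using that by auto
      fix p assume "p \<in> Q \<times> Q"
      then show "\<bar>g' (fst p) - g' (snd p)\<bar> - C * \<bar>fst p - snd p\<bar> powr \<beta> \<le> 0"
        using hol[of "fst p" "snd p"] g'eq by auto
    qed
    then show ?thesis by simp
  qed
  have Bd: "\<bar>g' x\<bar> \<le> B" if "x \<in> closure Q" for x
  proof (rule continuous_le_on_closure[of Q "\<lambda>x. \<bar>g' x\<bar>"])
    show "continuous_on (closure Q) (\<lambda>x. \<bar>g' x\<bar>)" using cont by (intro continuous_intros)
    show "x \<in> closure Q" by fact
    fix y assume "y \<in> Q" then show "\<bar>g' y\<bar> \<le> B" using bd g'eq by metis
  qed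
  show ?thesis using H Bd g'eq by (intro exI[of _ g']) auto
qed

lemma cpt_union:
  fixes F :: "nat \<Rightarrow> real \<Rightarrow> real" and P :: "real set set"
  assumes "finite P" and sub: "\<And>Q. Q \<in> P \<Longrightarrow> Q \<subseteq> {0..1}"
  and bd: "\<And>n x. \<bar>F n x\<bar> \<le> B"
  and hol: "\<And>Q n x y. Q \<in> P \<Longrightarrow> x \<in> Q \<Longrightarrow> y \<in> Q \<Longrightarrow> \<bar>F n x - F n y\<bar> \<le> C * \<bar>x - y\<bar> powr \<beta>"
  and \<beta>: "\<beta> > 0" and C: "C \<ge> 0"
  shows "\<exists>(r::nat\<Rightarrow>nat) g. strict_mono r \<and> (\<forall>e>0. \<exists>N. \<forall>n\<ge>N. \<forall>x\<in>\<Union>P. \<bar>F (r n) x - g x\<bar> < e)"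
  using assms(1) sub hol
proof (induction P rule: finite_induct)
  case empty
  show ?case by (rule exI[of _ "id::nat\<Rightarrow>nat"], rule exI[of _ "\<lambda>x::real. 0::real"]) (simp add: strict_mono_def)
next
  case (insert Q P)
  have "\<exists>(r::nat\<Rightarrow>nat) g. strict_mono r \<and> (\<forall>e>0. \<exists>N. \<forall>n\<ge>N. \<forall>x\<in>\<Union>P. \<bar>F (r n) x - g x\<bar> < e)"
  proof (rule insert.IH)
    show "\<And>Q. Q \<in> P \<Longrightarrow> Q \<subseteq> {0..1}" using insert.prems(1) by blast
    show "\<And>Qa n x y. Qa \<in> P \<Longrightarrow> x \<in> Qa \<Longrightarrow> y \<in> Qa \<Longrightarrow> \<bar>F n x - F n y\<bar> \<le> C * \<bar>x - y\<bar> powr \<beta>"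
      using insert.prems(2) by blast
  qed
  then obtain r :: "nat \<Rightarrow> nat" and g where r: "strict_mono r"
    and conv0: "\<forall>e>0. \<exists>N. \<forall>n\<ge>N. \<forall>x\<in>\<Union>P. \<bar>F (r n) x - g x\<bar> < e" by blast
  have conv: "\<exists>N. \<forall>n\<ge>N. \<forall>x\<in>\<Union>P. \<bar>F (r n) x - g x\<bar> < e" if "e > 0" for e
    using conv0 that by blast
  have QS: "Q \<subseteq> {0..1}" using insert.prems by auto
  have holQ: "\<And>n x y. x \<in> Q \<Longrightarrow> y \<in> Q \<Longrightarrow> \<bar>F n x - F n y\<bar> \<le> C * \<bar>x - y\<bar> powr \<beta>"
    using insert.prems(2) by blast
  have "\<forall>n. \<exists>g'. (\<forall>x\<in>Q. g' x = F (r n) x) \<and>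
    (\<forall>x\<in>closure Q. \<forall>y\<in>closure Q. \<bar>g' x - g' y\<bar> \<le> C * \<bar>x - y\<bar> powr \<beta>) \<and>
    (\<forall>x\<in>closure Q. \<bar>g' x\<bar> \<le> B)"
    using holder_ext[OF \<beta> C holQ bd] by blast
  from choice[OF this] obtain E where E: "\<forall>n. (\<forall>x\<in>Q. E n x = F (r n) x) \<and>
    (\<forall>x\<in>closure Q. \<forall>y\<in>closure Q. \<bar>E n x - E n y\<bar> \<le> C * \<bar>x - y\<bar> powr \<beta>) \<and>
    (\<forall>x\<in>closure Q. \<bar>E n x\<bar> \<le> B)" by blast
  have E1: "\<And>n x. x \<in> Q \<Longrightarrow> E n x = F (r n) x" using E by blast
  have E2: "\<And>n x y. x \<in> closure Q \<Longrightarrow> y \<in> closure Q \<Longrightarrow> \<bar>E n x - E n y\<bar> \<le> C * \<bar>x - y\<bar> powr \<beta>"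
    using E by blast
  have E3: "\<And>n x. x \<in> closure Q \<Longrightarrow> \<bar>E n x\<bar> \<le> B" using E by blast
  have cpt: "compact (closure Q)"
    using QS by (simp add: bounded_subset[OF bounded_closed_interval])
  obtain gQ k where k: "strict_mono (k :: nat \<Rightarrow> nat)"
    and convQ: "\<And>e. 0 < e \<Longrightarrow> \<exists>N. \<forall>n x. n \<ge> N \<and> x \<in> closure Q \<longrightarrow> norm (E (k n) x - gQ x) < e"
  proof (rule Arzela_Ascoli[OF cpt, of E B])
    show "\<And>n x. x \<in> closure Q \<Longrightarrow> norm (E n x) \<le> B" using E3 by simp
    fix x e assume x: "x \<in> closure Q" and e: "(0::real) < e"
    obtain d where d: "d > 0" "\<And>z. 0 \<le> z \<Longrightarrow> z < d \<Longrightarrow> C * z powr \<beta> < e"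
      using powr_small[OF \<beta> C e] by blast
    show "\<exists>d>0. \<forall>n y. y \<in> closure Q \<and> norm (x - y) < d \<longrightarrow> norm (E n x - E n y) < e"
      using d E2 x by (metis abs_ge_zero le_less_trans real_norm_def)
  qed auto
  define g2 where "g2 = (\<lambda>x. if x \<in> Q then gQ x else g x)"
  show ?case
  proof (intro exI[of _ "r \<circ> k"] exI[of _ g2] conjI allI impI)
    show "strict_mono (r \<circ> k)" using r k by (rule strict_mono_o)
    fix e :: real assume e: "e > 0"
    from convQ[OF e] obtain N1 where N1': "\<forall>n x. n \<ge> N1 \<and> x \<in> closure Q \<longrightarrow> norm (E (k n) x - gQ x) < e"
      by blast
    have N1: "\<And>n x. n \<ge> N1 \<Longrightarrow> x \<in> closure Q \<Longrightarrow> \<bar>E (k n) x - gQ x\<bar> < e"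
      using N1' by simp
    from conv[OF e] obtain N2 where N2': "\<forall>n\<ge>N2. \<forall>x\<in>\<Union>P. \<bar>F (r n) x - g x\<bar> < e" by blast
    have N2: "\<And>n x. n \<ge> N2 \<Longrightarrow> x \<in> \<Union>P \<Longrightarrow> \<bar>F (r n) x - g x\<bar> < e"
      using N2' by blast
    show "\<exists>N. \<forall>n\<ge>N. \<forall>x\<in>\<Union>(insert Q P). \<bar>F ((r \<circ> k) n) x - g2 x\<bar> < e"
    proof (intro exI[of _ "max N1 N2"] allI impI ballI)
      fix n x assume n: "max N1 N2 \<le> n" and x: "x \<in> \<Union>(insert Q P)"
      show "\<bar>F ((r \<circ> k) n) x - g2 x\<bar> < e"
      proof (cases "x \<in> Q")
        case True
        then show ?thesis using N1[of n x] n E1[of x "k n"] closure_subset[of Q] unfolding g2_def by auto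
      next
        case False
        then have "x \<in> \<Union>P" using x by auto
        moreover have "k n \<ge> N2" using n seq_suble[OF k, of n] by auto
        ultimately show ?thesis using N2[of "k n" x] False unfolding g2_def by auto
      qed
    qed
  qed
qed

lemma unif_L2:
  assumes L2u: "\<And>n. L2 (u n)" and hout: "\<And>x. x \<notin> {0..1} \<Longrightarrow> h x = 0"
  and bd: "\<And>n x. \<bar>u n x\<bar> \<le> B"
  and conv: "\<And>e. e > 0 \<Longrightarrow> \<exists>N. \<forall>n\<ge>N. \<forall>x\<in>{0..1}. \<bar>u n x - h x\<bar> < e"
  shows "L2 h \<and> (\<lambda>n. nrm (\<lambda>x. u n x - h x)) \<longlonglongrightarrow> 0"
proof -
  have pconv: "(\<lambda>n. u n x) \<longlonglongrightarrow> h x" for x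
  proof (cases "x \<in> {0..1}")
    case True
    show ?thesis unfolding lim_sequentially dist_real_def using conv True by fastforce
  next
    case False then show ?thesis using L2D(3)[OF L2u] hout by simp
  qed
  have hm: "h \<in> borel_measurable lborel"
    by (rule borel_measurable_LIMSEQ_real[OF pconv]) (use L2D(1)[OF L2u] in auto)
  from conv[of 1] obtain N where N0: "\<forall>n\<ge>N. \<forall>x\<in>{0..1}. \<bar>u n x - h x\<bar> < 1" by auto
  then have N: "\<And>n x. n \<ge> N \<Longrightarrow> x \<in> {0..1} \<Longrightarrow> \<bar>u n x - h x\<bar> < 1" by blast
  have sq: "v\<^sup>2 \<le> c\<^sup>2" if "\<bar>v\<bar> \<le> c" for v c :: real
  proof -
    have "\<bar>v\<bar>\<^sup>2 \<le> c\<^sup>2" using that by (intro power_mono) auto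
    then show ?thesis by simp
  qed
  have hint: "integrable lborel (\<lambda>x. (h x)\<^sup>2)"
  proof (rule Bochner_Integration.integrable_bound[of _ "\<lambda>x. (B + 1)\<^sup>2 * indicator {0..1::real} x"])
    show "integrable lborel (\<lambda>x. (B + 1)\<^sup>2 * indicator {0..1::real} x)"
      by (rule integrable_mult_right) (rule int_ind)
    show "(\<lambda>x. (h x)\<^sup>2) \<in> borel_measurable lborel" using hm by measurable
    show "AE x in lborel. norm ((h x)\<^sup>2) \<le> norm ((B + 1)\<^sup>2 * indicator {0..1::real} x)"
    proof (rule AE_I2)
      fix x show "norm ((h x)\<^sup>2) \<le> norm ((B + 1)\<^sup>2 * indicator {0..1::real} x)"
      proof (cases "x \<in> {0..1}")
        case True
        have "\<bar>h x\<bar> \<le> B + 1" using N[of N x] True bd[of N x] by linarith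
        then show ?thesis using True sq by simp
      next
        case False then show ?thesis using hout by simp
      qed
    qed
  qed
  have L2h: "L2 h" unfolding L2_def using hm hint hout by auto
  have small: "nrm (\<lambda>x. u n x - h x) \<le> e" if "e > 0" "\<forall>x\<in>{0..1}. \<bar>u n x - h x\<bar> < e" for n e
  proof -
    have "ip (\<lambda>x. u n x - h x) (\<lambda>x. u n x - h x) \<le> (\<integral>x. e\<^sup>2 * indicator {0..1::real} x \<partial>lborel)"
      unfolding ip_def
    proof (intro Bochner_Integration.integral_mono)
      show "integrable lborel (\<lambda>x. (u n x - h x) * (u n x - h x))"
        using L2_integrable_mult[OF L2_diff[OF L2u L2h] L2_diff[OF L2u L2h]] .
      show "integrable lborel (\<lambda>x. e\<^sup>2 * indicator {0..1::real} x)"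
        by (rule integrable_mult_right) (rule int_ind)
      fix x
      show "(u n x - h x) * (u n x - h x) \<le> e\<^sup>2 * indicator {0..1::real} x"
      proof (cases "x \<in> {0..1}")
        case True
        then have "\<bar>u n x - h x\<bar> < e" using that(2) by blast
        then have "\<bar>u n x - h x\<bar> \<le> e" by simp
        then have "(u n x - h x)\<^sup>2 \<le> e\<^sup>2" using sq by blast
        then show ?thesis using True by (simp add: power2_eq_square)
      next
        case False
        then have "u n x = 0" "h x = 0" using hout L2D(3)[OF L2u] by auto
        then show ?thesis by simp
      qed
    qed
    also have "\<dots> = e\<^sup>2" by (simp add: int_ind_eq)
    finally have "ip (\<lambda>x. u n x - h x) (\<lambda>x. u n x - h x) \<le> e\<^sup>2" .
    then have "(nrm (\<lambda>x. u n x - h x))\<^sup>2 \<le> e\<^sup>2" by (simp only: nrm_sq)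
    then show ?thesis by (rule power2_le_imp_le) (use that(1) in simp)
  qed
  have "(\<lambda>n. nrm (\<lambda>x. u n x - h x)) \<longlonglongrightarrow> 0"
    unfolding lim_sequentially dist_real_def
  proof (intro allI impI)
    fix r :: real assume r: "r > 0"
    have "r / 2 > 0" using r by simp
    from conv[OF this] obtain N where N0: "\<forall>n\<ge>N. \<forall>x\<in>{0..1}. \<bar>u n x - h x\<bar> < r / 2" by blast
    then have N: "\<And>n. n \<ge> N \<Longrightarrow> \<forall>x\<in>{0..1}. \<bar>u n x - h x\<bar> < r / 2" by blast
    show "\<exists>N. \<forall>n\<ge>N. \<bar>nrm (\<lambda>x. u n x - h x) - 0\<bar> < r"
    proof (intro exI[of _ N] allI impI)
      fix n assume "n \<ge> N"
      then have "nrm (\<lambda>x. u n x - h x) \<le> r / 2" using small[of "r/2" n] N r by auto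
      then show "\<bar>nrm (\<lambda>x. u n x - h x) - 0\<bar> < r" using r nrm_nonneg by simp
    qed
  qed
  then show ?thesis using L2h by simp
qed

lemma Op_compact:
  fixes P :: "real set set" and K :: "real \<Rightarrow> real \<Rightarrow> real" and M \<beta> B :: real
    and F :: "nat \<Rightarrow> real \<Rightarrow> real"
  assumes K: "kern K" and fin: "finite P" and sub: "\<And>Q. Q \<in> P \<Longrightarrow> Q \<subseteq> {0..1}"
    and cover: "\<Union>P = {0..1}" and \<beta>: "\<beta> > 0" and M: "M \<ge> 0"
    and holOp: "\<And>f Q x y. L2 f \<Longrightarrow> Q \<in> P \<Longrightarrow> x \<in> Q \<Longrightarrow> y \<in> Q \<Longrightarrow>
        \<bar>Op K f x - Op K f y\<bar> \<le> M * nrm f * \<bar>x - y\<bar> powr \<beta>"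
    and F: "\<And>n. L2 (F n)" "\<And>n. nrm (F n) \<le> B"
  shows "\<exists>(r::nat\<Rightarrow>nat) h. strict_mono r \<and> L2 h \<and> (\<lambda>n. nrm (\<lambda>x. Op K (F (r n)) x - h x)) \<longlonglongrightarrow> 0"
proof -
  have B: "B \<ge> 0" using F(2)[of 0] nrm_nonneg[of "F 0"] by simp
  have bd: "\<bar>Op K (F n) x\<bar> \<le> B" for n x using Op_bound[OF K F(1)] F(2) order_trans by blast
  have hol: "\<bar>Op K (F n) x - Op K (F n) y\<bar> \<le> (M * B) * \<bar>x - y\<bar> powr \<beta>"
    if "Q \<in> P" "x \<in> Q" "y \<in> Q" for Q n x y
  proof -
    have "\<bar>Op K (F n) x - Op K (F n) y\<bar> \<le> M * nrm (F n) * \<bar>x - y\<bar> powr \<beta>"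
      by (rule holOp[OF F(1) that])
    also have "\<dots> \<le> (M * B) * \<bar>x - y\<bar> powr \<beta>"
      using F(2)[of n] M by (intro mult_right_mono mult_left_mono) auto
    finally show ?thesis .
  qed
  have "\<exists>(r::nat\<Rightarrow>nat) g. strict_mono r \<and> (\<forall>e>0. \<exists>N. \<forall>n\<ge>N. \<forall>x\<in>\<Union>P. \<bar>Op K (F (r n)) x - g x\<bar> < e)"
  proof (rule cpt_union[where F="\<lambda>n. Op K (F n)" and C="M*B" and \<beta>=\<beta> and B=B])
    show "finite P" by (rule fin)
    show "\<And>Q. Q \<in> P \<Longrightarrow> Q \<subseteq> {0..1}" by (rule sub)
    show "\<And>n x. \<bar>Op K (F n) x\<bar> \<le> B" by (rule bd)
    show "\<And>Q n x y. Q \<in> P \<Longrightarrow> x \<in> Q \<Longrightarrow> y \<in> Q \<Longrightarrow>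
      \<bar>Op K (F n) x - Op K (F n) y\<bar> \<le> M * B * \<bar>x - y\<bar> powr \<beta>" by (rule hol)
    show "\<beta> > 0" by (rule \<beta>)
    show "M * B \<ge> 0" using M B by simp
  qed
  then obtain r :: "nat \<Rightarrow> nat" and g where r: "strict_mono r"
    and conv0: "\<forall>e>0. \<exists>N. \<forall>n\<ge>N. \<forall>x\<in>\<Union>P. \<bar>Op K (F (r n)) x - g x\<bar> < e"
    by blast
  have conv: "\<exists>N. \<forall>n\<ge>N. \<forall>x\<in>\<Union>P. \<bar>Op K (F (r n)) x - g x\<bar> < e" if "e > 0" for e
    using conv0 that by blast
  define h where "h = (\<lambda>x. if x \<in> {0..1} then g x else 0)"
  have "L2 h \<and> (\<lambda>n. nrm (\<lambda>x. Op K (F (r n)) x - h x)) \<longlonglongrightarrow> 0"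
  proof (rule unif_L2[where B=B])
    show "\<And>n. L2 (Op K (F (r n)))" using Op_L2[OF K F(1)] .
    show "\<And>x. x \<notin> {0..1} \<Longrightarrow> h x = 0" by (auto simp: h_def)
    show "\<And>n x. \<bar>Op K (F (r n)) x\<bar> \<le> B" using bd .
    fix e :: real assume "e > 0"
    then obtain N where N: "\<forall>n\<ge>N. \<forall>x\<in>\<Union>P. \<bar>Op K (F (r n)) x - g x\<bar> < e"
      using conv by blast
    show "\<exists>N. \<forall>n\<ge>N. \<forall>x\<in>{0..1}. \<bar>Op K (F (r n)) x - h x\<bar> < e"
    proof (intro exI[of _ N] allI impI ballI)
      fix n x assume "n \<ge> N" "x \<in> {0..1::real}"
      then show "\<bar>Op K (F (r n)) x - h x\<bar> < e" using N cover unfolding h_def by simp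
    qed
  qed
  then show ?thesis using r by blast
qed

lemma Op_sum:
  assumes K: "kern K" and I: "finite I" and u: "\<And>i. i \<in> I \<Longrightarrow> L2 (u i)"
  shows "Op K (\<lambda>x. \<Sum>i\<in>I. c i * u i x) = (\<lambda>x. \<Sum>i\<in>I. c i * Op K (u i) x)"
  using I u
proof (induction I rule: finite_induct)
  case empty
  show ?case using Op_lin[OF K L2_zero L2_zero, of 0 0] by simp
next
  case (insert j I)
  have L: "L2 (\<lambda>x. \<Sum>i\<in>I. c i * u i x)" using insert.prems insert.hyps by (intro L2_sum L2_scale) auto
  have "Op K (\<lambda>x. \<Sum>i\<in>insert j I. c i * u i x) = Op K (\<lambda>x. c j * u j x + 1 * (\<Sum>i\<in>I. c i * u i x))"
    using insert.hyps by simp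
  also have "\<dots> = (\<lambda>x. c j * Op K (u j) x + 1 * Op K (\<lambda>x. \<Sum>i\<in>I. c i * u i x) x)"
    by (rule Op_lin[OF K _ L]) (use insert.prems in auto)
  also have "\<dots> = (\<lambda>x. \<Sum>i\<in>insert j I. c i * Op K (u i) x)"
    using insert by simp
  finally show ?case .
qed

lemma ip_sum:
  assumes I: "finite I" and u: "\<And>i. i \<in> I \<Longrightarrow> L2 (u i)" and g: "L2 g"
  shows "ip (\<lambda>x. \<Sum>i\<in>I. c i * u i x) g = (\<Sum>i\<in>I. c i * ip (u i) g)"
  using I u
proof (induction I rule: finite_induct)
  case empty
  show ?case unfolding ip_def by simp
next
  case (insert j I)
  have L: "L2 (\<lambda>x. \<Sum>i\<in>I. c i * u i x)" using insert.prems insert.hyps by (intro L2_sum L2_scale) auto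
  have "ip (\<lambda>x. \<Sum>i\<in>insert j I. c i * u i x) g = ip (\<lambda>x. c j * u j x + 1 * (\<Sum>i\<in>I. c i * u i x)) g"
    using insert.hyps by simp
  also have "\<dots> = c j * ip (u j) g + 1 * ip (\<lambda>x. \<Sum>i\<in>I. c i * u i x) g"
    by (rule ip_lin[OF _ L g]) (use insert.prems in auto)
  also have "\<dots> = (\<Sum>i\<in>insert j I. c i * ip (u i) g)"
    using insert by simp
  finally show ?case .
qed

lemma nrm_sum:
  assumes I: "finite I" and u: "\<And>i. i \<in> I \<Longrightarrow> L2 (u i)"
  shows "nrm (\<lambda>x. \<Sum>i\<in>I. c i * u i x) \<le> (\<Sum>i\<in>I. \<bar>c i\<bar> * nrm (u i))"
  using I u
proof (induction I rule: finite_induct)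
  case empty
  show ?case unfolding nrm_def ip_def by simp
next
  case (insert j I)
  have L: "L2 (\<lambda>x. \<Sum>i\<in>I. c i * u i x)" using insert.prems insert.hyps by (intro L2_sum L2_scale) auto
  have "nrm (\<lambda>x. \<Sum>i\<in>insert j I. c i * u i x) = nrm (\<lambda>x. c j * u j x + 1 * (\<Sum>i\<in>I. c i * u i x))"
    using insert.hyps by simp
  also have "\<dots> \<le> \<bar>c j\<bar> * nrm (u j) + \<bar>1\<bar> * nrm (\<lambda>x. \<Sum>i\<in>I. c i * u i x)"
    by (rule nrm_lin[OF _ L]) (use insert.prems in auto)
  also have "\<dots> \<le> \<bar>c j\<bar> * nrm (u j) + (\<Sum>i\<in>I. \<bar>c i\<bar> * nrm (u i))"
    using insert by simp
  also have "\<dots> = (\<Sum>i\<in>insert j I. \<bar>c i\<bar> * nrm (u i))"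
    using insert by simp
  finally show ?case .
qed

definition Tp :: "(real \<Rightarrow> real \<Rightarrow> real) \<Rightarrow> nat \<Rightarrow> (real \<Rightarrow> real) \<Rightarrow> real \<Rightarrow> real" where
  "Tp K k = Op K ^^ k"

lemma Tp_0[simp]: "Tp K 0 f = f" unfolding Tp_def by simp
lemma Tp_Suc: "Tp K (Suc k) f = Op K (Tp K k f)" unfolding Tp_def by simp
lemma Tp_Suc': "Tp K (Suc k) f = Tp K k (Op K f)" unfolding Tp_def by (simp only: funpow_Suc_right comp_apply)

lemma Tp_L2: "kern K \<Longrightarrow> L2 f \<Longrightarrow> L2 (Tp K k f)"
  by (induction k) (auto simp: Tp_Suc intro: Op_L2)

lemma Tp_nrm: "kern K \<Longrightarrow> L2 f \<Longrightarrow> nrm (Tp K k f) \<le> nrm f"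
proof (induction k)
  case 0 then show ?case by simp
next
  case (Suc k)
  then show ?case unfolding Tp_Suc using Op_nrm[OF Suc.prems(1) Tp_L2[OF Suc.prems]] by (meson order_trans)
qed

lemma Tp_lin:
  assumes K: "kern K" and f: "L2 f" and g: "L2 g"
  shows "Tp K k (\<lambda>x. c * f x + d * g x) = (\<lambda>x. c * Tp K k f x + d * Tp K k g x)"
proof (induction k)
  case 0 then show ?case by simp
next
  case (Suc k)
  show ?case unfolding Tp_Suc Suc.IH by (rule Op_lin[OF K Tp_L2[OF K f] Tp_L2[OF K g]])
qed

lemma Tp_sa:
  assumes K: "kern K" and sym: "\<And>x y. K x y = K y x" and f: "L2 f" and g: "L2 g"
  shows "ip (Tp K k f) g = ip f (Tp K k g)"
  using f g
proof (induction k arbitrary: f g)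
  case 0 then show ?case by simp
next
  case (Suc k)
  have "ip (Tp K (Suc k) f) g = ip (Op K (Tp K k f)) g" by (simp add: Tp_Suc)
  also have "\<dots> = ip (Tp K k f) (Op K g)" by (rule Op_sa[OF K Tp_L2[OF K Suc.prems(1)] Suc.prems(2) sym])
  also have "\<dots> = ip f (Tp K k (Op K g))" by (rule Suc.IH[OF Suc.prems(1) Op_L2[OF K Suc.prems(2)]])
  also have "\<dots> = ip f (Tp K (Suc k) g)" by (simp add: Tp_Suc')
  finally show ?case .
qed

lemma Tp_comm: "Op K (Tp K k f) = Tp K k (Op K f)"
proof -
  have "(Op K ^^ Suc k) f = Op K ((Op K ^^ k) f)" by simp
  moreover have "(Op K ^^ Suc k) f = (Op K ^^ k) (Op K f)" by (simp only: funpow_Suc_right comp_apply)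
  ultimately show ?thesis by (simp add: Tp_def)
qed

lemma Tp_eigen:
  assumes K: "kern K" and h: "L2 h" and e: "nrm (\<lambda>x. Op K h x - \<nu> * h x) = 0"
  shows "nrm (\<lambda>x. Tp K k h x - \<nu> ^ k * h x) = 0"
proof (induction k)
  case 0 then show ?case unfolding nrm_def ip_def by simp
next
  case (Suc k)
  have L1: "L2 (\<lambda>x. Tp K k h x - \<nu> ^ k * h x)" using Tp_L2[OF K h] h by auto
  have L2': "L2 (\<lambda>x. Op K h x - \<nu> * h x)" using Op_L2[OF K h] h by auto
  have eq: "(\<lambda>x. Tp K (Suc k) h x - \<nu> ^ Suc k * h x) =
      (\<lambda>x. 1 * Op K (\<lambda>x. Tp K k h x - \<nu> ^ k * h x) x + \<nu> ^ k * (Op K h x - \<nu> * h x))"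
  proof -
    have "Op K (\<lambda>x. 1 * Tp K k h x + (- (\<nu> ^ k)) * h x) = (\<lambda>x. 1 * Op K (Tp K k h) x + (- (\<nu> ^ k)) * Op K h x)"
      by (rule Op_lin[OF K Tp_L2[OF K h] h])
    then have "Op K (\<lambda>x. Tp K k h x - \<nu> ^ k * h x) = (\<lambda>x. Op K (Tp K k h) x - \<nu> ^ k * Op K h x)"
      by simp
    then show ?thesis by (auto simp: Tp_Suc algebra_simps)
  qed
  have "nrm (\<lambda>x. Tp K (Suc k) h x - \<nu> ^ Suc k * h x) \<le>
     \<bar>1\<bar> * nrm (Op K (\<lambda>x. Tp K k h x - \<nu> ^ k * h x)) + \<bar>\<nu> ^ k\<bar> * nrm (\<lambda>x. Op K h x - \<nu> * h x)"
    unfolding eq by (rule nrm_lin[OF Op_L2[OF K L1] L2'])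
  also have "\<dots> \<le> 0" using Op_nrm[OF K L1] Suc.IH e by simp
  finally show ?case using nrm_nonneg by (metis antisym)
qed

lemma kern_meas1: assumes "kern K" shows "(\<lambda>t. K t y) \<in> borel_measurable lborel"
proof -
  have "(\<lambda>t::real. (t, y)) \<in> measurable lborel (lborel \<Otimes>\<^sub>M lborel)" by measurable
  note X = measurable_compose[OF this kernD(1)[OF assms]]
  show ?thesis using X by simp
qed

lemma interval_ball:
  fixes Q :: "real set"
  assumes "is_interval Q" "interior Q \<noteq> {}" "x \<in> Q" "d > 0"
  shows "\<exists>y0 r. r > 0 \<and> ball y0 r \<subseteq> Q \<inter> ball x d"
proof -
  have cv: "convex Q" using assms(1) by (rule is_interval_convex)
  have "x \<in> closure (interior Q)"
    using convex_closure_interior[OF cv assms(2)] closure_subset assms(3) by auto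
  then obtain y0 where y0: "y0 \<in> interior Q" "dist y0 x < d / 2"
    using closure_approachable[of x "interior Q"] assms(4) by (meson half_gt_zero)
  then obtain r0 where r0: "r0 > 0" "ball y0 r0 \<subseteq> Q"
    using mem_interior by blast
  have sub: "ball y0 (min r0 (d / 2)) \<subseteq> Q \<inter> ball x d"
  proof
    fix z assume z: "z \<in> ball y0 (min r0 (d / 2))"
    then have "z \<in> Q" using r0 by auto
    moreover have "dist x z < d"
      using z y0(2) dist_triangle[of x z y0] by (auto simp: dist_commute)
    ultimately show "z \<in> Q \<inter> ball x d" by auto
  qed
  moreover have "min r0 (d / 2) > 0" using r0 assms(4) by simp
  ultimately show ?thesis by blast
qed

lemma zero_from_AE:
  fixes g :: "real \<Rightarrow> real" and P :: "real set set"
  assumes intv: "\<And>Q. Q \<in> P \<Longrightarrow> is_interval Q" and intne: "\<And>Q. Q \<in> P \<Longrightarrow> interior Q \<noteq> {}"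
    and cover: "\<Union>P = {0..1}" and \<beta>: "\<beta> > 0"
    and hol: "\<And>Q x y. Q \<in> P \<Longrightarrow> x \<in> Q \<Longrightarrow> y \<in> Q \<Longrightarrow> \<bar>g x - g y\<bar> \<le> C * \<bar>x - y\<bar> powr \<beta>"
    and ae: "AE x in lborel. g x = 0"
    and x: "x \<in> {0..1}"
  shows "g x = 0"
proof (rule ccontr)
  assume gx: "g x \<noteq> 0"
  have "x \<in> \<Union>P" using x cover by simp
  then obtain Q where Q: "Q \<in> P" "x \<in> Q" by blast
  define C' where "C' = max C 0"
  have C': "C' \<ge> 0" unfolding C'_def by simp
  obtain d where d: "d > 0" "\<And>z. 0 \<le> z \<Longrightarrow> z < d \<Longrightarrow> C' * z powr \<beta> < \<bar>g x\<bar> / 2"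
    using powr_small[OF \<beta> C', of "\<bar>g x\<bar> / 2"] gx by auto
  obtain y0 r where r: "r > 0" "ball y0 r \<subseteq> Q \<inter> ball x d"
    using interval_ball[OF intv[OF Q(1)] intne[OF Q(1)] Q(2) d(1)] by blast
  have nz: "g z \<noteq> 0" if "z \<in> ball y0 r" for z
  proof -
    have zQ: "z \<in> Q" and zx: "dist x z < d" using that r by auto
    have "\<bar>g z - g x\<bar> \<le> C * \<bar>z - x\<bar> powr \<beta>" by (rule hol[OF Q(1) zQ Q(2)])
    also have "\<dots> \<le> C' * \<bar>z - x\<bar> powr \<beta>" unfolding C'_def by (intro mult_right_mono) auto
    also have "\<dots> < \<bar>g x\<bar> / 2" using d(2)[of "\<bar>z - x\<bar>"] zx by (simp add: dist_real_def abs_minus_commute)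
    finally show ?thesis by auto
  qed
  from ae obtain N where N: "{x \<in> space lborel. \<not> g x = 0} \<subseteq> N" "emeasure lborel N = 0" "N \<in> sets lborel"
    by (rule AE_E)
  have "ball y0 r \<subseteq> N" using N(1) nz by auto
  then have "emeasure lborel (ball y0 r) \<le> emeasure lborel N" using N(3) by (intro emeasure_mono) auto
  moreover have "emeasure lborel (ball y0 r) = ennreal (2 * r)"
    unfolding ball_eq_greaterThanLessThan using r by simp
  ultimately show False using N(2) r by simp
qed

locale gsetup =
  fixes W :: "real \<Rightarrow> real \<Rightarrow> real" and P :: "real set set" and \<beta> M :: real
  assumes gr: "graphon W"
  and finP: "finite P" and coverP: "\<Union>P = {0..1}"
  and intv: "\<And>Q. Q \<in> P \<Longrightarrow> is_interval Q" and intne: "\<And>Q. Q \<in> P \<Longrightarrow> interior Q \<noteq> {}"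
  and \<beta>pos: "\<beta> > 0" and Mnn: "M \<ge> 0"
  and hol: "\<And>Qa Qb. Qa \<in> P \<Longrightarrow> Qb \<in> P \<Longrightarrow> holder_on \<beta> M (Qa \<times> Qb) W"
begin

definition Wz :: "real \<Rightarrow> real \<Rightarrow> real" where
  "Wz = (\<lambda>x y. if x \<in> {0..1} \<and> y \<in> {0..1} then W x y else 0)"

lemma subP: "Q \<in> P \<Longrightarrow> Q \<subseteq> {0..1}" using coverP by auto

lemma Wz_sym: "Wz x y = Wz y x"
  using gr unfolding Wz_def graphon_def by auto

lemma kern_Wz: "kern Wz"
proof -
  have sets: "{0..1::real} \<times> {0..1::real} \<in> sets (lborel \<Otimes>\<^sub>M lborel)"
    by (rule pair_measureI) auto
  have "case_prod W \<in> borel_measurable (restrict_space (lborel \<Otimes>\<^sub>M lborel) ({0..1} \<times> {0..1}))"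
    using gr unfolding graphon_def by auto
  moreover have iff: "case_prod W \<in> borel_measurable (restrict_space (lborel \<Otimes>\<^sub>M lborel) ({0..1} \<times> {0..1})) \<longleftrightarrow>
     (\<lambda>p. indicator ({0..1::real} \<times> {0..1::real}) p *\<^sub>R case_prod W p) \<in> borel_measurable (lborel \<Otimes>\<^sub>M lborel)"
    by (rule borel_measurable_restrict_space_iff) (use sets in simp)
  ultimately have "(\<lambda>p. indicator ({0..1} \<times> {0..1}) p *\<^sub>R case_prod W p) \<in> borel_measurable (lborel \<Otimes>\<^sub>M lborel)"
    by blast
  moreover have "(\<lambda>p. indicator ({0..1} \<times> {0..1}) p *\<^sub>R case_prod W p) = case_prod Wz"
    by (auto simp: Wz_def fun_eq_iff indicator_def)
  ultimately have m: "case_prod Wz \<in> borel_measurable (lborel \<Otimes>\<^sub>M lborel)" by simp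
  show ?thesis unfolding kern_def using m gr unfolding graphon_def Wz_def by auto
qed

lemma Wz_row:
  assumes Q: "Q \<in> P" "x \<in> Q" "x' \<in> Q"
  shows "\<bar>Wz x t - Wz x' t\<bar> \<le> M * \<bar>x - x'\<bar> powr \<beta>"
proof (cases "t \<in> {0..1}")
  case True
  then have "t \<in> \<Union>P" using coverP by simp
  then obtain Qb where Qb: "Qb \<in> P" "t \<in> Qb" by blast
  have "\<bar>case_prod W (x, t) - case_prod W (x', t)\<bar> \<le> M * dist (x, t) (x', t) powr \<beta>"
    using hol[OF Q(1) Qb(1)] Q Qb unfolding holder_on_def by auto
  moreover have "x \<in> {0..1}" "x' \<in> {0..1}" using subP[OF Q(1)] Q by auto
  ultimately show ?thesis using True by (simp add: Wz_def dist_Pair_Pair dist_real_def)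
next
  case False
  then have "Wz x t = 0" "Wz x' t = 0" by (auto simp: Wz_def)
  then show ?thesis using Mnn by simp
qed

lemma Wz_col:
  assumes Q: "Q \<in> P" "y \<in> Q" "y' \<in> Q"
  shows "\<bar>Wz t y - Wz t y'\<bar> \<le> M * \<bar>y - y'\<bar> powr \<beta>"
  using Wz_row[OF assms, of t] by (simp add: Wz_sym)

lemma Op_hol:
  assumes f: "L2 f" and Q: "Q \<in> P" "x \<in> Q" "x' \<in> Q"
  shows "\<bar>Op Wz f x - Op Wz f x'\<bar> \<le> M * nrm f * \<bar>x - x'\<bar> powr \<beta>"
proof -
  have i1: "integrable lborel (\<lambda>t. Wz x t * f t)" by (rule Op_integrable[OF kern_Wz f])
  have i2: "integrable lborel (\<lambda>t. Wz x' t * f t)" by (rule Op_integrable[OF kern_Wz f])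
  have "Op Wz f x - Op Wz f x' = (\<integral>t. (Wz x t - Wz x' t) * f t \<partial>lborel)"
    unfolding Op_def using i1 i2 by (simp add: left_diff_distrib)
  also have "\<bar>\<dots>\<bar> \<le> (\<integral>t. \<bar>(Wz x t - Wz x' t) * f t\<bar> \<partial>lborel)" by (rule integral_abs_bound)
  also have "\<dots> \<le> (\<integral>t. (M * \<bar>x - x'\<bar> powr \<beta>) * \<bar>f t\<bar> \<partial>lborel)"
  proof (rule Bochner_Integration.integral_mono)
    show "integrable lborel (\<lambda>t. \<bar>(Wz x t - Wz x' t) * f t\<bar>)"
      using i1 i2 by (simp add: left_diff_distrib)
    show "integrable lborel (\<lambda>t. M * \<bar>x - x'\<bar> powr \<beta> * \<bar>f t\<bar>)"
      using L2_integrable[OF f] by simp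
    fix t show "\<bar>(Wz x t - Wz x' t) * f t\<bar> \<le> M * \<bar>x - x'\<bar> powr \<beta> * \<bar>f t\<bar>"
      unfolding abs_mult by (intro mult_right_mono Wz_row[OF Q]) auto
  qed
  also have "\<dots> = (M * \<bar>x - x'\<bar> powr \<beta>) * (\<integral>t. \<bar>f t\<bar> \<partial>lborel)" by simp
  also have "\<dots> \<le> (M * \<bar>x - x'\<bar> powr \<beta>) * nrm f"
    using ip_ind_abs[OF f] Mnn by (intro mult_left_mono) auto
  finally show ?thesis by (simp add: ac_simps)
qed

end

lemma Op_comp:
  assumes K: "kern K" and L: "kern L" and f: "L2 f"
  shows "Op K (Op L f) x = (\<integral>y. (\<integral>t. K x t * L t y \<partial>lborel) * f y \<partial>lborel)"
proof -
  have [measurable]: "case_prod K \<in> borel_measurable (lborel \<Otimes>\<^sub>M lborel)" by (rule kernD(1)[OF K])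
  have [measurable]: "case_prod L \<in> borel_measurable (lborel \<Otimes>\<^sub>M lborel)" by (rule kernD(1)[OF L])
  have [measurable]: "f \<in> borel_measurable lborel" by (rule L2D(1)[OF f])
  define F where "F = (\<lambda>t y. K x t * L t y * f y)"
  have Fm[measurable]: "case_prod F \<in> borel_measurable (lborel \<Otimes>\<^sub>M lborel)"
    unfolding F_def by measurable
  have intF: "integrable (lborel \<Otimes>\<^sub>M lborel) (case_prod F)"
  proof (rule lborel_pair.Fubini_integrable)
    show "case_prod F \<in> borel_measurable (lborel \<Otimes>\<^sub>M lborel)" by (rule Fm)
    show "AE t in lborel. integrable lborel (\<lambda>y. case_prod F (t, y))"
    proof (rule AE_I2)
      fix t
      have "integrable lborel (\<lambda>y. K x t * (L t y * f y))"
        using Op_integrable[OF L f, of t] by simp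
      then show "integrable lborel (\<lambda>y. case_prod F (t, y))" unfolding F_def by (simp add: ac_simps)
    qed
    show "integrable lborel (\<lambda>t. \<integral>y. norm (case_prod F (t, y)) \<partial>lborel)"
    proof (rule Bochner_Integration.integrable_bound[of _ "\<lambda>t. nrm f * indicator {0..1::real} t"])
      show "integrable lborel (\<lambda>t. nrm f * indicator {0..1::real} t)"
        by (rule integrable_mult_right) (rule int_ind)
      show "(\<lambda>t. \<integral>y. norm (case_prod F (t, y)) \<partial>lborel) \<in> borel_measurable lborel"
        by measurable
      show "AE t in lborel. norm (\<integral>y. norm (case_prod F (t, y)) \<partial>lborel) \<le> norm (nrm f * indicator {0..1::real} t)"
      proof (rule AE_I2)
        fix t
        show "norm (\<integral>y. norm (case_prod F (t, y)) \<partial>lborel) \<le> norm (nrm f * indicator {0..1::real} t)"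
        proof (cases "t \<in> {0..1}")
          case False
          then have "\<And>y. case_prod F (t, y) = 0" unfolding F_def using kernD(4)[OF K] by simp
          then show ?thesis by simp
        next
          case True
          have "(\<integral>y. norm (case_prod F (t, y)) \<partial>lborel) = \<bar>K x t\<bar> * (\<integral>y. \<bar>L t y * f y\<bar> \<partial>lborel)"
            unfolding F_def by (simp add: abs_mult mult.assoc)
          also have "\<dots> \<le> 1 * (\<integral>y. \<bar>f y\<bar> \<partial>lborel)"
          proof (rule mult_mono)
            show "\<bar>K x t\<bar> \<le> 1" by (rule kernD(2)[OF K])
            show "(\<integral>y. \<bar>L t y * f y\<bar> \<partial>lborel) \<le> (\<integral>y. \<bar>f y\<bar> \<partial>lborel)"
              using Op_integrable[OF L f] L2_integrable[OF f] kernD(2)[OF L]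
              by (intro Bochner_Integration.integral_mono integrable_abs) (simp_all add: abs_mult mult_left_le_one_le)
          qed auto
          also have "\<dots> \<le> nrm f" using ip_ind_abs[OF f] by simp
          finally show ?thesis using True by (simp add: nrm_nonneg)
        qed
      qed
    qed
  qed
  have "Op K (Op L f) x = (\<integral>t. (\<integral>y. F t y \<partial>lborel) \<partial>lborel)"
    unfolding Op_def F_def by (simp add: mult.assoc)
  also have "\<dots> = (\<integral>y. (\<integral>t. F t y \<partial>lborel) \<partial>lborel)"
    by (rule lborel_pair.Fubini_integral[OF intF, symmetric])
  also have "\<dots> = (\<integral>y. (\<integral>t. K x t * L t y \<partial>lborel) * f y \<partial>lborel)"
    unfolding F_def by simp
  finally show ?thesis .
qed

context gsetup
begin

definition G :: "nat \<Rightarrow> real \<Rightarrow> real \<Rightarrow> real" where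
  "G = graphon_moment Wz"

lemma Wz_out: "t \<notin> {0..1} \<Longrightarrow> Wz x t = 0" "x \<notin> {0..1} \<Longrightarrow> Wz x t = 0"
  unfolding Wz_def by auto

lemma G1: "G (Suc 0) = Wz" unfolding G_def by simp

lemma G_SS: "G (Suc (Suc k)) x y = (\<integral>t. Wz x t * G (Suc k) t y \<partial>lborel)"
  unfolding G_def graphon_moment.simps set_lebesgue_integral_def
proof (rule Bochner_Integration.integral_cong)
  fix t
  show "indicator {0..1} t *\<^sub>R (Wz x t * graphon_moment Wz (Suc k) t y) = Wz x t * graphon_moment Wz (Suc k) t y"
  proof (cases "t \<in> {0..1}")
    case True then show ?thesis by simp
  next
    case False then show ?thesis by (simp add: Wz_out)
  qed
qed simp

lemma kern_G: "kern (G (Suc k))"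
proof (induction k)
  case 0 then show ?case using G1 kern_Wz by simp
next
  case (Suc k)
  define g where "g = G (Suc k)"
  have kg: "kern g" unfolding g_def by (rule Suc.IH)
  have [measurable]: "case_prod Wz \<in> borel_measurable (lborel \<Otimes>\<^sub>M lborel)" by (rule kernD(1)[OF kern_Wz])
  have [measurable]: "case_prod g \<in> borel_measurable (lborel \<Otimes>\<^sub>M lborel)" by (rule kernD(1)[OF kg])
  have m0: "(\<lambda>p. \<integral>t. Wz (fst p) t * g t (snd p) \<partial>lborel) \<in> borel_measurable (lborel \<Otimes>\<^sub>M lborel)"
  proof (rule lborel.borel_measurable_lebesgue_integral)
    show "case_prod (\<lambda>p t. Wz (fst p) t * g t (snd p)) \<in> borel_measurable ((lborel \<Otimes>\<^sub>M lborel) \<Otimes>\<^sub>M lborel)"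
      by measurable
  qed
  have eqf: "case_prod (G (Suc (Suc k))) = (\<lambda>p. \<integral>t. Wz (fst p) t * g t (snd p) \<partial>lborel)"
    by (auto simp: fun_eq_iff G_SS g_def)
  have m: "case_prod (G (Suc (Suc k))) \<in> borel_measurable (lborel \<Otimes>\<^sub>M lborel)"
    unfolding eqf by (rule m0)
  have int: "integrable lborel (\<lambda>t. Wz x t * g t y)" for x y
  proof (rule Bochner_Integration.integrable_bound[of _ "indicator {0..1::real}"])
    show "integrable lborel (indicator {0..1::real} :: real \<Rightarrow> real)" by (rule int_ind)
    show "(\<lambda>t. Wz x t * g t y) \<in> borel_measurable lborel"
      using kern_meas2[OF kern_Wz, of x] kern_meas1[OF kg, of y] by measurable
    show "AE t in lborel. norm (Wz x t * g t y) \<le> norm (indicator {0..1::real} t :: real)"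
    proof (rule AE_I2)
      fix t
      show "norm (Wz x t * g t y) \<le> norm (indicator {0..1::real} t :: real)"
      proof (cases "t \<in> {0..1}")
        case True
        have "\<bar>Wz x t\<bar> * \<bar>g t y\<bar> \<le> 1 * 1"
          using kernD(2)[OF kern_Wz] kernD(2)[OF kg] by (intro mult_mono) auto
        then show ?thesis using True by (simp add: abs_mult)
      next
        case False then show ?thesis by (simp add: Wz_out)
      qed
    qed
  qed
  have bd: "\<bar>G (Suc (Suc k)) x y\<bar> \<le> 1" for x y
  proof -
    have "\<bar>G (Suc (Suc k)) x y\<bar> \<le> (\<integral>t. \<bar>Wz x t * g t y\<bar> \<partial>lborel)"
      unfolding G_SS g_def[symmetric] by (rule integral_abs_bound)
    also have "\<dots> \<le> (\<integral>t. indicator {0..1::real} t \<partial>lborel)"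
    proof (rule Bochner_Integration.integral_mono)
      show "integrable lborel (\<lambda>t. \<bar>Wz x t * g t y\<bar>)" using int by simp
      show "integrable lborel (indicator {0..1::real} :: real \<Rightarrow> real)" by (rule int_ind)
      fix t
      show "\<bar>Wz x t * g t y\<bar> \<le> indicator {0..1::real} t"
      proof (cases "t \<in> {0..1}")
        case True
        have "\<bar>Wz x t\<bar> * \<bar>g t y\<bar> \<le> 1 * 1"
          using kernD(2)[OF kern_Wz] kernD(2)[OF kg] by (intro mult_mono) auto
        then show ?thesis using True by (simp add: abs_mult)
      next
        case False then show ?thesis by (simp add: Wz_out)
      qed
    qed
    also have "\<dots> = 1" by (rule int_ind_eq)
    finally show ?thesis .
  qed
  have out: "G (Suc (Suc k)) x y = 0" if "x \<notin> {0..1} \<or> y \<notin> {0..1}" for x y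
    unfolding G_SS using that kernD(4)[OF kg] by (auto simp: Wz_out g_def)
  show ?case unfolding kern_def using m bd out by blast
qed

lemma Tp_G: "L2 f \<Longrightarrow> Tp Wz (Suc k) f = Op (G (Suc k)) f"
proof (induction k)
  case 0 then show ?case by (simp add: G1 Tp_Suc)
next
  case (Suc k)
  have "Tp Wz (Suc (Suc k)) f = Op Wz (Op (G (Suc k)) f)"
    unfolding Tp_Suc[of Wz "Suc k"] using Suc by simp
  also have "\<dots> = Op (G (Suc (Suc k))) f"
  proof
    fix x
    show "Op Wz (Op (G (Suc k)) f) x = Op (G (Suc (Suc k))) f x"
      unfolding Op_comp[OF kern_Wz kern_G Suc.prems] unfolding Op_def G_SS ..
  qed
  finally show ?case .
qed

lemma G_W: "x \<in> {0..1} \<Longrightarrow> y \<in> {0..1} \<Longrightarrow> graphon_moment W (Suc k) x y = G (Suc k) x y"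
proof (induction k arbitrary: x y)
  case 0 then show ?case by (simp add: G1 Wz_def)
next
  case (Suc k)
  show ?case unfolding G_def graphon_moment.simps
  proof (rule set_lebesgue_integral_cong)
    show "{0..1::real} \<in> sets lborel" by (simp add: borel_closed)
    show "\<forall>t. t \<in> {0..1} \<longrightarrow> W x t * graphon_moment W (Suc k) t y = Wz x t * graphon_moment Wz (Suc k) t y"
      using Suc by (auto simp: Wz_def G_def)
  qed
qed

lemma G_col:
  assumes Q: "Q \<in> P" "y \<in> Q" "y' \<in> Q"
  shows "\<bar>G (Suc k) x y - G (Suc k) x y'\<bar> \<le> M * \<bar>y - y'\<bar> powr \<beta>"
proof (induction k arbitrary: x)
  case 0 then show ?case using Wz_col[OF Q] by (simp add: G1)
next
  case (Suc k)
  define g where "g = G (Suc k)"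
  have kg: "kern g" unfolding g_def by (rule kern_G)
  have i: "integrable lborel (\<lambda>t. Wz x t * g t z)" for z
  proof (rule Bochner_Integration.integrable_bound[of _ "indicator {0..1::real}"])
    show "integrable lborel (indicator {0..1::real} :: real \<Rightarrow> real)" by (rule int_ind)
    show "(\<lambda>t. Wz x t * g t z) \<in> borel_measurable lborel"
      using kern_meas2[OF kern_Wz, of x] kern_meas1[OF kg, of z] by measurable
    show "AE t in lborel. norm (Wz x t * g t z) \<le> norm (indicator {0..1::real} t :: real)"
    proof (rule AE_I2)
      fix t
      show "norm (Wz x t * g t z) \<le> norm (indicator {0..1::real} t :: real)"
      proof (cases "t \<in> {0..1}")
        case True
        have "\<bar>Wz x t\<bar> * \<bar>g t z\<bar> \<le> 1 * 1"
          using kernD(2)[OF kern_Wz] kernD(2)[OF kg] by (intro mult_mono) auto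
        then show ?thesis using True by (simp add: abs_mult)
      next
        case False then show ?thesis by (simp add: Wz_out)
      qed
    qed
  qed
  have "G (Suc (Suc k)) x y - G (Suc (Suc k)) x y' = (\<integral>t. Wz x t * (g t y - g t y') \<partial>lborel)"
    unfolding G_SS g_def[symmetric] using i[of y] i[of y'] by (simp add: right_diff_distrib)
  also have "\<bar>\<dots>\<bar> \<le> (\<integral>t. \<bar>Wz x t * (g t y - g t y')\<bar> \<partial>lborel)" by (rule integral_abs_bound)
  also have "\<dots> \<le> (\<integral>t. indicator {0..1::real} t * (M * \<bar>y - y'\<bar> powr \<beta>) \<partial>lborel)"
  proof (rule Bochner_Integration.integral_mono)
    show "integrable lborel (\<lambda>t. \<bar>Wz x t * (g t y - g t y')\<bar>)"
      using i[of y] i[of y'] by (simp add: right_diff_distrib)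
    show "integrable lborel (\<lambda>t. indicator {0..1::real} t * (M * \<bar>y - y'\<bar> powr \<beta>))"
      by (rule integrable_mult_left) (rule int_ind)
    fix t
    show "\<bar>Wz x t * (g t y - g t y')\<bar> \<le> indicator {0..1::real} t * (M * \<bar>y - y'\<bar> powr \<beta>)"
    proof (cases "t \<in> {0..1}")
      case True
      have "\<bar>Wz x t\<bar> * \<bar>g t y - g t y'\<bar> \<le> 1 * (M * \<bar>y - y'\<bar> powr \<beta>)"
        using kernD(2)[OF kern_Wz] Suc.IH[of t] Mnn unfolding g_def by (intro mult_mono) auto
      then show ?thesis using True by (simp add: abs_mult)
    next
      case False then show ?thesis by (simp add: Wz_out)
    qed
  qed
  also have "\<dots> = M * \<bar>y - y'\<bar> powr \<beta>" by (simp add: int_ind_eq)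
  finally show ?case .
qed

end

lemma L2_bounded:
  assumes m: "g \<in> borel_measurable lborel" and b: "\<And>x. \<bar>g x\<bar> \<le> B" and z: "\<And>x. x \<notin> {0..1} \<Longrightarrow> g x = 0"
  shows "L2 g"
proof -
  have "integrable lborel (\<lambda>x. (g x)\<^sup>2)"
  proof (rule Bochner_Integration.integrable_bound[of _ "\<lambda>x. B\<^sup>2 * indicator {0..1::real} x"])
    show "integrable lborel (\<lambda>x. B\<^sup>2 * indicator {0..1::real} x)"
      by (rule integrable_mult_right) (rule int_ind)
    show "(\<lambda>x. (g x)\<^sup>2) \<in> borel_measurable lborel" using m by measurable
    show "AE x in lborel. norm ((g x)\<^sup>2) \<le> norm (B\<^sup>2 * indicator {0..1::real} x)"
    proof (rule AE_I2)
      fix x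
      show "norm ((g x)\<^sup>2) \<le> norm (B\<^sup>2 * indicator {0..1::real} x)"
      proof (cases "x \<in> {0..1}")
        case True
        have "\<bar>g x\<bar>\<^sup>2 \<le> B\<^sup>2" using b[of x] by (intro power_mono) auto
        then show ?thesis using True by simp
      next
        case False then show ?thesis using z by simp
      qed
    qed
  qed
  then show ?thesis unfolding L2_def using m z by auto
qed

context gsetup
begin

lemma eig_in_E:
  assumes h: "L2 h" and hp: "nrm h > 0" and nu: "\<nu> \<noteq> 0"
    and e: "nrm (\<lambda>x. Op Wz h x - \<nu> * h x) = 0"
  shows "\<nu> \<in> graphon_eigenvalues W"
  unfolding graphon_eigenvalues_def
proof (intro CollectI conjI exI[of _ h])
  show "\<nu> \<noteq> 0" by fact
  show "h \<in> borel_measurable lborel" using L2D(1)[OF h] .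
  have "(\<lambda>x. indicator {0..1} x *\<^sub>R (h x)\<^sup>2) = (\<lambda>x. (h x)\<^sup>2)"
    using L2D(3)[OF h] by (auto simp: indicator_def fun_eq_iff)
  then show "set_integrable lborel {0..1} (\<lambda>y. (h y)\<^sup>2)"
    unfolding set_integrable_def using L2D(2)[OF h] by simp
  show "\<not> (AE x in lborel. x \<in> {0..1} \<longrightarrow> h x = 0)"
  proof
    assume a: "AE x in lborel. x \<in> {0..1} \<longrightarrow> h x = 0"
    have "AE x in lborel. h x = 0"
      using a by eventually_elim (use L2D(3)[OF h] in blast)
    then have "nrm h = 0" by (rule AE_nrm_zero[OF h])
    then show False using hp by simp
  qed
  have L: "L2 (\<lambda>x. Op Wz h x - \<nu> * h x)" using Op_L2[OF kern_Wz h] h by auto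
  have ae: "AE x in lborel. Op Wz h x - \<nu> * h x = 0" using nrm_zero_AE[OF L e] by simp
  show "AE x in lborel. x \<in> {0..1} \<longrightarrow> (LINT y:{0..1}|lborel. W x y * h y) = \<nu> * h x"
    using ae
  proof eventually_elim
    case (elim x)
    show ?case
    proof
      assume x: "x \<in> {0..1}"
      have "(LINT y:{0..1}|lborel. W x y * h y) = Op Wz h x"
        unfolding set_lebesgue_integral_def Op_def
      proof (rule Bochner_Integration.integral_cong)
        fix y
        show "indicator {0..1} y *\<^sub>R (W x y * h y) = Wz x y * h y"
          using x L2D(3)[OF h, of y] by (cases "y \<in> {0..1}") (auto simp: Wz_def)
      qed simp
      then show "(LINT y:{0..1}|lborel. W x y * h y) = \<nu> * h x" using elim by simp
    qed
  qed
qed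

end

context gsetup
begin

lemma main_identity:
  assumes finE: "finite (graphon_eigenvalues W)"
  shows "\<exists>b :: nat \<Rightarrow> real. \<forall>x\<in>{0..1}. \<forall>y\<in>{0..1}.
           W x y = (\<Sum>i=1..distinct_rank W. b i * graphon_moment W (i + 1) x y)"
proof -
  define E where "E = graphon_eigenvalues W"
  define m where "m = card E"
  define p :: "real poly" where "p = (\<Prod>\<mu>\<in>E. [:- \<mu>, 1:])"
  define a where "a = (\<lambda>k. coeff p k)"
  define Cs where "Cs = (\<Sum>k\<le>m. \<bar>a k\<bar>)"
  define Pf where "Pf = (\<lambda>f x. \<Sum>k\<le>m. a k * Tp Wz k f x)"
  define S where "S = (\<lambda>f. Op Wz (Pf f))"
  have finE': "finite E" using finE by (simp add: E_def)
  have E0: "0 \<notin> E" unfolding E_def graphon_eigenvalues_def by auto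
  have K: "kern Wz" by (rule kern_Wz)
  have poly_p: "poly p z = (\<Prod>\<mu>\<in>E. z - \<mu>)" for z unfolding p_def by (simp add: poly_prod)
  have pE: "\<mu> \<in> E \<Longrightarrow> poly p \<mu> = 0" for \<mu> unfolding poly_p using finE' by auto
  have degp: "degree p \<le> m"
  proof -
    have "degree p \<le> sum (degree \<circ> (\<lambda>\<mu>. [:- \<mu>, 1::real:])) E"
      unfolding p_def by (rule degree_prod_sum_le[OF finE'])
    also have "\<dots> = m" unfolding m_def by simp
    finally show ?thesis .
  qed
  have p_sum: "poly p z = (\<Sum>k\<le>m. a k * z ^ k)" for z
  proof -
    have "poly p z = (\<Sum>k\<le>degree p. a k * z ^ k)" unfolding a_def by (rule poly_altdef)
    also have "\<dots> = (\<Sum>k\<le>m. a k * z ^ k)"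
      by (rule sum.mono_neutral_left) (use degp in \<open>auto simp: a_def coeff_eq_0\<close>)
    finally show ?thesis .
  qed
  have a0: "a 0 \<noteq> 0"
  proof -
    have "a 0 = poly p 0" unfolding a_def by (simp add: poly_0_coeff_0)
    also have "\<dots> = (\<Prod>\<mu>\<in>E. 0 - \<mu>)" by (rule poly_p)
    also have "\<dots> \<noteq> 0" using finE' E0 by auto
    finally show ?thesis .
  qed
  have Pf_L2: "L2 f \<Longrightarrow> L2 (Pf f)" for f
    unfolding Pf_def by (intro L2_sum L2_scale Tp_L2[OF K]) auto
  have Pf_lin: "L2 f \<Longrightarrow> L2 g \<Longrightarrow> Pf (\<lambda>x. c * f x + d * g x) = (\<lambda>x. c * Pf f x + d * Pf g x)" for f g c d
    unfolding Pf_def by (simp add: Tp_lin[OF K] sum.distrib sum_distrib_left algebra_simps)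
  have Pf_nrm: "L2 f \<Longrightarrow> nrm (Pf f) \<le> Cs * nrm f" for f
  proof -
    assume f: "L2 f"
    have "nrm (Pf f) \<le> (\<Sum>k\<le>m. \<bar>a k\<bar> * nrm (Tp Wz k f))"
      unfolding Pf_def by (rule nrm_sum) (use Tp_L2[OF K f] in auto)
    also have "\<dots> \<le> (\<Sum>k\<le>m. \<bar>a k\<bar> * nrm f)"
      by (intro sum_mono mult_left_mono Tp_nrm[OF K f]) auto
    also have "\<dots> = Cs * nrm f" unfolding Cs_def by (simp add: sum_distrib_right)
    finally show ?thesis .
  qed
  have Pf_sa: "L2 f \<Longrightarrow> L2 g \<Longrightarrow> ip (Pf f) g = ip f (Pf g)" for f g
  proof -
    assume f: "L2 f" and g: "L2 g"
    have "ip (Pf f) g = (\<Sum>k\<le>m. a k * ip (Tp Wz k f) g)"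
      unfolding Pf_def by (rule ip_sum) (use Tp_L2[OF K f] g in auto)
    also have "\<dots> = (\<Sum>k\<le>m. a k * ip (Tp Wz k g) f)"
      using Tp_sa[OF K Wz_sym f g] by (simp add: ip_sym)
    also have "\<dots> = ip (Pf g) f"
      unfolding Pf_def by (rule ip_sum[symmetric]) (use Tp_L2[OF K g] f in auto)
    finally show ?thesis by (simp add: ip_sym)
  qed
  have Pf_comm: "L2 f \<Longrightarrow> Op Wz (Pf f) = Pf (Op Wz f)" for f
  proof -
    assume f: "L2 f"
    have "Op Wz (Pf f) = (\<lambda>x. \<Sum>k\<le>m. a k * Op Wz (Tp Wz k f) x)"
      unfolding Pf_def by (rule Op_sum[OF K]) (use Tp_L2[OF K f] in auto)
    also have "\<dots> = Pf (Op Wz f)" unfolding Pf_def Tp_comm ..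
    finally show ?thesis .
  qed
  have S_L2: "L2 f \<Longrightarrow> L2 (S f)" for f unfolding S_def by (intro Op_L2[OF K] Pf_L2)
  have S_lin: "L2 f \<Longrightarrow> L2 g \<Longrightarrow> S (\<lambda>x. c * f x + d * g x) = (\<lambda>x. c * S f x + d * S g x)" for f g c d
    unfolding S_def by (simp add: Pf_lin Op_lin[OF K Pf_L2 Pf_L2])
  have S_nrm: "L2 f \<Longrightarrow> nrm (S f) \<le> Cs * nrm f" for f
    unfolding S_def using Op_nrm[OF K Pf_L2] Pf_nrm by (meson order_trans)
  have S_sa: "L2 f \<Longrightarrow> L2 g \<Longrightarrow> ip (S f) g = ip f (S g)" for f g
  proof -
    assume f: "L2 f" and g: "L2 g"
    have "ip (S f) g = ip (Pf f) (Op Wz g)" unfolding S_def by (rule Op_sa[OF K Pf_L2[OF f] g Wz_sym])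
    also have "\<dots> = ip f (Pf (Op Wz g))" by (rule Pf_sa[OF f Op_L2[OF K g]])
    also have "\<dots> = ip f (S g)" unfolding S_def Pf_comm[OF g] ..
    finally show ?thesis .
  qed
  have subs: "\<And>Q. Q \<in> P \<Longrightarrow> Q \<subseteq> {0..1}" by (rule subP)
  have T_cpt: "\<exists>(r::nat\<Rightarrow>nat) h. strict_mono r \<and> L2 h \<and> (\<lambda>n. nrm (\<lambda>x. Op Wz (F (r n)) x - h x)) \<longlonglongrightarrow> 0"
    if "\<And>n. L2 (F n)" "\<And>n. nrm (F n) \<le> B" for F :: "nat \<Rightarrow> real \<Rightarrow> real" and B
    by (rule Op_compact[OF K finP subs coverP \<beta>pos Mnn Op_hol that])
  have claim: "nrm (S f) = 0" if f: "L2 f" for f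
  proof (rule ccontr)
    assume "nrm (S f) \<noteq> 0"
    then have f0: "nrm (S f) > 0" using nrm_nonneg[of "S f"] by simp
    obtain h la where h: "L2 h" and lam: "la \<noteq> 0" and hp: "nrm h > 0"
      and he: "nrm (\<lambda>x. S h x - la * h x) = 0"
    proof -
      have "\<exists>h la. h \<in> {f. L2 f} \<and> la \<noteq> 0 \<and> nrm h > 0 \<and> nrm (\<lambda>x. S h x - la * h x) = 0"
      proof (rule eigen_exists[where A=S and V="{f. L2 f}" and C=Cs])
        show "\<And>f. f \<in> {f. L2 f} \<Longrightarrow> L2 f" by simp
        show "\<And>f g c d. f \<in> {f. L2 f} \<Longrightarrow> g \<in> {f. L2 f} \<Longrightarrow> (\<lambda>x. c * f x + d * g x) \<in> {f. L2 f}" by auto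
        show "\<And>f. f \<in> {f. L2 f} \<Longrightarrow> S f \<in> {f. L2 f}" using S_L2 by simp
        show "\<And>f g c d. f \<in> {f. L2 f} \<Longrightarrow> g \<in> {f. L2 f} \<Longrightarrow> S (\<lambda>x. c * f x + d * g x) = (\<lambda>x. c * S f x + d * S g x)"
          using S_lin by simp
        show "\<And>f g. f \<in> {f. L2 f} \<Longrightarrow> g \<in> {f. L2 f} \<Longrightarrow> ip (S f) g = ip f (S g)" using S_sa by simp
        show "\<And>f. f \<in> {f. L2 f} \<Longrightarrow> nrm (S f) \<le> Cs * nrm f" using S_nrm by simp
        show "\<exists>r h. strict_mono r \<and> L2 h \<and> (\<lambda>n. nrm (\<lambda>x. S (F (r n)) x - h x)) \<longlonglongrightarrow> 0"
          if "\<And>n. F n \<in> {f. L2 f}" "\<And>n. nrm (F n) \<le> 1" for F :: "nat \<Rightarrow> real \<Rightarrow> real"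
        proof -
          have "\<exists>(r::nat\<Rightarrow>nat) h. strict_mono r \<and> L2 h \<and> (\<lambda>n. nrm (\<lambda>x. Op Wz ((\<lambda>n. Pf (F n)) (r n)) x - h x)) \<longlonglongrightarrow> 0"
          proof (rule T_cpt[where B=Cs])
            show "\<And>n. L2 (Pf (F n))" using that(1) Pf_L2 by simp
            show "\<And>n. nrm (Pf (F n)) \<le> Cs"
            proof -
              fix n
              have "nrm (Pf (F n)) \<le> Cs * nrm (F n)" using that(1) Pf_nrm by simp
              also have "\<dots> \<le> Cs * 1" using that(2)[of n] by (intro mult_left_mono) (auto simp: Cs_def)
              finally show "nrm (Pf (F n)) \<le> Cs" by simp
            qed
          qed
          then show ?thesis unfolding S_def by simp
        qed
        show "\<And>F h. (\<And>n. F n \<in> {f. L2 f}) \<Longrightarrow> L2 h \<Longrightarrow> (\<lambda>n. nrm (\<lambda>x. F n x - h x)) \<longlonglongrightarrow> 0 \<Longrightarrow> h \<in> {f. L2 f}"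
          by simp
        show "f \<in> {f. L2 f}" using f by simp
        show "nrm (S f) > 0" by fact
      qed
      then show ?thesis using that by blast
    qed
    define V where "V = {f. L2 f \<and> nrm (\<lambda>x. S f x - la * f x) = 0}"
    have V_eq: "(\<lambda>x. S (\<lambda>x. c * f x + d * g x) x - la * (c * f x + d * g x)) =
        (\<lambda>x. c * (S f x - la * f x) + d * (S g x - la * g x))" if "L2 f" "L2 g" for f g c d
      using S_lin[OF that] by (auto simp: algebra_simps)
    obtain h' \<nu> where h'V: "h' \<in> V" and nu: "\<nu> \<noteq> 0" and h'p: "nrm h' > 0"
      and h'e: "nrm (\<lambda>x. Op Wz h' x - \<nu> * h' x) = 0"
    proof -
      have "\<exists>h \<nu>. h \<in> V \<and> \<nu> \<noteq> 0 \<and> nrm h > 0 \<and> nrm (\<lambda>x. Op Wz h x - \<nu> * h x) = 0"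
      proof (rule eigen_exists[where A="Op Wz" and V=V and C=1])
        show VL2: "\<And>f. f \<in> V \<Longrightarrow> L2 f" unfolding V_def by simp
        show "(\<lambda>x. c * f x + d * g x) \<in> V" if "f \<in> V" "g \<in> V" for f g c d
        proof -
          have f: "L2 f" "nrm (\<lambda>x. S f x - la * f x) = 0" and g: "L2 g" "nrm (\<lambda>x. S g x - la * g x) = 0"
            using that unfolding V_def by auto
          have "nrm (\<lambda>x. S (\<lambda>x. c * f x + d * g x) x - la * (c * f x + d * g x))
              \<le> \<bar>c\<bar> * nrm (\<lambda>x. S f x - la * f x) + \<bar>d\<bar> * nrm (\<lambda>x. S g x - la * g x)"
            unfolding V_eq[OF f(1) g(1)]
            by (rule nrm_lin[OF L2_diff[OF S_L2[OF f(1)] L2_scale[OF f(1)]] L2_diff[OF S_L2[OF g(1)] L2_scale[OF g(1)]]])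
          then have "nrm (\<lambda>x. S (\<lambda>x. c * f x + d * g x) x - la * (c * f x + d * g x)) \<le> 0"
            using f(2) g(2) by simp
          then have "nrm (\<lambda>x. S (\<lambda>x. c * f x + d * g x) x - la * (c * f x + d * g x)) = 0"
            using nrm_nonneg by (intro antisym) auto
          then show ?thesis unfolding V_def using f g by auto
        qed
        show "Op Wz f \<in> V" if "f \<in> V" for f
        proof -
          have f: "L2 f" "nrm (\<lambda>x. S f x - la * f x) = 0" using that unfolding V_def by auto
          have "S (Op Wz f) = Op Wz (S f)" unfolding S_def Pf_comm[OF f(1)] ..
          then have "(\<lambda>x. S (Op Wz f) x - la * Op Wz f x) = Op Wz (\<lambda>x. 1 * S f x + (- la) * f x)"
            using Op_lin[OF K S_L2[OF f(1)] f(1), of 1 "- la"] by simp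
          then have eq: "(\<lambda>x. S (Op Wz f) x - la * Op Wz f x) = Op Wz (\<lambda>x. S f x - la * f x)"
            by simp
          have L: "L2 (\<lambda>x. S f x - la * f x)" by (rule L2_diff[OF S_L2[OF f(1)] L2_scale[OF f(1)]])
          have "nrm (\<lambda>x. S (Op Wz f) x - la * Op Wz f x) \<le> 0"
            unfolding eq using Op_nrm[OF K L] f(2) by simp
          then have "nrm (\<lambda>x. S (Op Wz f) x - la * Op Wz f x) = 0"
            using nrm_nonneg by (intro antisym) auto
          then show ?thesis unfolding V_def using Op_L2[OF K f(1)] by auto
        qed
        show "\<And>f g c d. f \<in> V \<Longrightarrow> g \<in> V \<Longrightarrow> Op Wz (\<lambda>x. c * f x + d * g x) = (\<lambda>x. c * Op Wz f x + d * Op Wz g x)"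
          using Op_lin[OF K] VL2 by blast
        show "\<And>f g. f \<in> V \<Longrightarrow> g \<in> V \<Longrightarrow> ip (Op Wz f) g = ip f (Op Wz g)"
          using Op_sa[OF K _ _ Wz_sym] VL2 by blast
        show "\<And>f. f \<in> V \<Longrightarrow> nrm (Op Wz f) \<le> 1 * nrm f"
          using Op_nrm[OF K] VL2 by simp
        show "\<exists>r h. strict_mono r \<and> L2 h \<and> (\<lambda>n. nrm (\<lambda>x. Op Wz (F (r n)) x - h x)) \<longlonglongrightarrow> 0"
          if "\<And>n. F n \<in> V" "\<And>n. nrm (F n) \<le> 1" for F :: "nat \<Rightarrow> real \<Rightarrow> real"
          by (rule T_cpt[where B=1]) (use that VL2 in auto)
        show "h \<in> V" if FV: "\<And>n. F n \<in> V" and hL: "L2 h" and lim: "(\<lambda>n. nrm (\<lambda>x. F n x - h x)) \<longlonglongrightarrow> 0"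
          for F :: "nat \<Rightarrow> real \<Rightarrow> real" and h
        proof -
          have FL: "L2 (F n)" and Fe: "nrm (\<lambda>x. S (F n) x - la * F n x) = 0" for n
            using FV[of n] unfolding V_def by auto
          have le: "nrm (\<lambda>x. S h x - la * h x) \<le> (Cs + \<bar>la\<bar>) * nrm (\<lambda>x. F n x - h x)" for n
          proof -
            have Sd: "S (\<lambda>x. 1 * h x + (-1) * F n x) = (\<lambda>x. 1 * S h x + (-1) * S (F n) x)"
              by (rule S_lin[OF hL FL])
            have eq: "(\<lambda>x. S h x - la * h x) = (\<lambda>x. 1 * S (\<lambda>x. 1 * h x + (-1) * F n x) x
                 + 1 * (S (F n) x - la * F n x) + la * (F n x - h x))"
              unfolding Sd by (auto simp: algebra_simps)
            have "nrm (\<lambda>x. S h x - la * h x) \<le> \<bar>1\<bar> * nrm (S (\<lambda>x. 1 * h x + (-1) * F n x))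
                + \<bar>1\<bar> * nrm (\<lambda>x. S (F n) x - la * F n x) + \<bar>la\<bar> * nrm (\<lambda>x. F n x - h x)"
              unfolding eq by (rule nrm_lin3[OF S_L2[OF L2_lin[OF hL FL]] L2_diff[OF S_L2[OF FL] L2_scale[OF FL]] L2_diff[OF FL hL]])
            also have "nrm (S (\<lambda>x. 1 * h x + (-1) * F n x)) \<le> Cs * nrm (\<lambda>x. F n x - h x)"
            proof -
              have "nrm (S (\<lambda>x. 1 * h x + (-1) * F n x)) \<le> Cs * nrm (\<lambda>x. 1 * h x + (-1) * F n x)"
                using S_nrm hL FL by auto
              also have "nrm (\<lambda>x. 1 * h x + (-1) * F n x) = nrm (\<lambda>x. F n x - h x)"
                using nrm_minus_comm[of h "F n"] by simp
              finally show ?thesis .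
            qed
            finally show ?thesis using Fe[of n] by (simp add: algebra_simps)
          qed
          have "(\<lambda>n. (Cs + \<bar>la\<bar>) * nrm (\<lambda>x. F n x - h x)) \<longlonglongrightarrow> (Cs + \<bar>la\<bar>) * 0"
            by (intro tendsto_intros lim)
          then have "nrm (\<lambda>x. S h x - la * h x) \<le> 0"
            using le by (intro LIMSEQ_le_const[where a = "nrm (\<lambda>x. S h x - la * h x)"]) auto
          then show ?thesis unfolding V_def using hL nrm_nonneg by (simp add: antisym)
        qed
        show "h \<in> V" unfolding V_def using h he by simp
        show "nrm (Op Wz h) > 0"
        proof (rule ccontr)
          assume "\<not> nrm (Op Wz h) > 0"
          then have Th0: "nrm (Op Wz h) = 0" using nrm_nonneg[of "Op Wz h"] by simp
          have "nrm (S h) = nrm (Pf (Op Wz h))" unfolding S_def Pf_comm[OF h] ..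
          also have "\<dots> \<le> Cs * nrm (Op Wz h)" by (rule Pf_nrm[OF Op_L2[OF K h]])
          finally have Sh0: "nrm (S h) = 0" using Th0 nrm_nonneg by (simp add: antisym)
          have "nrm (\<lambda>x. la * h x) = nrm (\<lambda>x. S h x - (S h x - la * h x))" by simp
          also have "\<dots> \<le> nrm (S h) + nrm (\<lambda>x. S h x - la * h x)"
            by (rule nrm_diff[OF S_L2[OF h] L2_diff[OF S_L2[OF h] L2_scale[OF h]]])
          finally have "\<bar>la\<bar> * nrm h \<le> 0" using Sh0 he by (simp add: nrm_scale)
          then show False using lam hp by (simp add: mult_le_0_iff)
        qed
      qed
      then show ?thesis using that by blast
    qed
    have h'L: "L2 h'" and h'S: "nrm (\<lambda>x. S h' x - la * h' x) = 0" using h'V unfolding V_def by auto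
    have Tk: "nrm (\<lambda>x. Tp Wz k h' x - \<nu> ^ k * h' x) = 0" for k by (rule Tp_eigen[OF K h'L h'e])
    have Pfe: "nrm (\<lambda>x. Pf h' x - poly p \<nu> * h' x) = 0"
    proof -
      have eq: "(\<lambda>x. Pf h' x - poly p \<nu> * h' x) = (\<lambda>x. \<Sum>k\<le>m. a k * (Tp Wz k h' x - \<nu> ^ k * h' x))"
      proof -
        have pe: "poly p \<nu> * h' x = (\<Sum>k\<le>m. a k * (\<nu> ^ k * h' x))" for x
          unfolding p_sum by (simp add: sum_distrib_right mult.assoc)
        show ?thesis unfolding Pf_def pe by (simp add: sum_subtractf right_diff_distrib)
      qed
      have "nrm (\<lambda>x. Pf h' x - poly p \<nu> * h' x) \<le> (\<Sum>k\<le>m. \<bar>a k\<bar> * nrm (\<lambda>x. Tp Wz k h' x - \<nu> ^ k * h' x))"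
        unfolding eq by (rule nrm_sum) (simp, rule L2_diff[OF Tp_L2[OF K h'L] L2_scale[OF h'L]])
      also have "\<dots> = 0" using Tk by simp
      finally show ?thesis using nrm_nonneg by (simp add: antisym)
    qed
    have Sh': "S h' = (\<lambda>x. poly p \<nu> * Op Wz h' x)"
    proof -
      have "S h' = Op Wz (\<lambda>x. poly p \<nu> * h' x)"
        unfolding S_def by (rule Op_cong[OF K Pf_L2[OF h'L]]) (use h'L Pfe in auto)
      also have "\<dots> = (\<lambda>x. poly p \<nu> * Op Wz h' x)"
        using Op_lin[OF K h'L h'L, of "poly p \<nu>" 0] by simp
      finally show ?thesis .
    qed
    have "nrm (\<lambda>x. S h' x - \<nu> * poly p \<nu> * h' x) = \<bar>poly p \<nu>\<bar> * nrm (\<lambda>x. Op Wz h' x - \<nu> * h' x)"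
    proof -
      have "(\<lambda>x. S h' x - \<nu> * poly p \<nu> * h' x) = (\<lambda>x. poly p \<nu> * (Op Wz h' x - \<nu> * h' x))"
        unfolding Sh' by (auto simp: algebra_simps)
      then show ?thesis by (simp add: nrm_scale)
    qed
    then have e2: "nrm (\<lambda>x. S h' x - \<nu> * poly p \<nu> * h' x) = 0" using h'e by simp
    have "\<bar>\<nu> * poly p \<nu> - la\<bar> * nrm h' = nrm (\<lambda>x. (S h' x - la * h' x) - (S h' x - \<nu> * poly p \<nu> * h' x))"
    proof -
      have "(\<lambda>x. (S h' x - la * h' x) - (S h' x - \<nu> * poly p \<nu> * h' x)) = (\<lambda>x. (\<nu> * poly p \<nu> - la) * h' x)"
        by (auto simp: algebra_simps)
      then show ?thesis by (simp only: nrm_scale)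
    qed
    also have "\<dots> \<le> nrm (\<lambda>x. S h' x - la * h' x) + nrm (\<lambda>x. S h' x - \<nu> * poly p \<nu> * h' x)"
      by (rule nrm_diff[OF L2_diff[OF S_L2[OF h'L] L2_scale[OF h'L]] L2_diff[OF S_L2[OF h'L] L2_scale[OF h'L]]])
    also have "\<dots> = 0" using h'S e2 by simp
    finally have "\<nu> * poly p \<nu> = la" using h'p by (simp add: mult_le_0_iff)
    then have "poly p \<nu> \<noteq> 0" using lam by auto
    then have "\<nu> \<notin> E" using pE by blast
    moreover have "\<nu> \<in> E" unfolding E_def by (rule eig_in_E[OF h'L h'p nu h'e])
    ultimately show False by simp
  qed
  define Kk where "Kk = (\<lambda>x y. \<Sum>k\<le>m. a k * G (Suc k) x y)"
  have Kk_zero: "Kk x0 y = 0" if x0: "x0 \<in> {0..1}" and y: "y \<in> {0..1}" for x0 y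
  proof -
    define f0 where "f0 = (\<lambda>y. Kk x0 y)"
    have f0m: "f0 \<in> borel_measurable lborel"
      unfolding f0_def Kk_def using kern_meas2[OF kern_G] by measurable
    have Gb: "\<bar>G (Suc k) x y\<bar> \<le> 1" for k x y using kernD(2)[OF kern_G] .
    have f0b: "\<bar>f0 y\<bar> \<le> Cs" for y
    proof -
      have "\<bar>f0 y\<bar> \<le> (\<Sum>k\<le>m. \<bar>a k * G (Suc k) x0 y\<bar>)" unfolding f0_def Kk_def by (rule sum_abs)
      also have "\<dots> \<le> (\<Sum>k\<le>m. \<bar>a k\<bar>)"
        by (intro sum_mono) (auto simp: abs_mult intro!: mult_right_le_one_le Gb)
      finally show ?thesis unfolding Cs_def .
    qed
    have f0z: "f0 y = 0" if "y \<notin> {0..1}" for y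
      unfolding f0_def Kk_def using kernD(4)[OF kern_G] that by simp
    have f0L: "L2 f0" by (rule L2_bounded[OF f0m f0b f0z])
    have Sf0: "S f0 x = (\<integral>y. Kk x y * f0 y \<partial>lborel)" for x
    proof -
      have "S f0 = (\<lambda>x. \<Sum>k\<le>m. a k * Op Wz (Tp Wz k f0) x)"
        unfolding S_def Pf_def by (rule Op_sum[OF K]) (use Tp_L2[OF K f0L] in auto)
      then have "S f0 x = (\<Sum>k\<le>m. a k * Op (G (Suc k)) f0 x)"
        using Tp_G[OF f0L] by (simp add: Tp_Suc)
      also have "\<dots> = (\<integral>y. (\<Sum>k\<le>m. a k * (G (Suc k) x y * f0 y)) \<partial>lborel)"
        unfolding Op_def using Op_integrable[OF kern_G f0L] by simp
      also have "\<dots> = (\<integral>y. Kk x y * f0 y \<partial>lborel)"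
        unfolding Kk_def by (simp add: sum_distrib_right mult.assoc)
      finally show ?thesis .
    qed
    have Sf0_hol: "\<bar>S f0 x - S f0 x'\<bar> \<le> (M * nrm (Pf f0)) * \<bar>x - x'\<bar> powr \<beta>"
      if "Q \<in> P" "x \<in> Q" "x' \<in> Q" for Q x x'
      unfolding S_def using Op_hol[OF Pf_L2[OF f0L] that] by simp
    have "AE x in lborel. S f0 x = 0" using nrm_zero_AE[OF S_L2[OF f0L] claim[OF f0L]] .
    then have "S f0 x0 = 0"
      by (intro zero_from_AE[OF intv intne coverP \<beta>pos Sf0_hol _ x0]) auto
    then have int0: "(\<integral>y. (f0 y)\<^sup>2 \<partial>lborel) = 0" using Sf0[of x0] by (simp add: f0_def power2_eq_square)
    have "AE y in lborel. (f0 y)\<^sup>2 = 0"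
      using integral_nonneg_eq_0_iff_AE[OF L2D(2)[OF f0L]] int0 by simp
    then have ae: "AE y in lborel. f0 y = 0" by simp
    have f0_hol: "\<bar>f0 z - f0 z'\<bar> \<le> (Cs * M) * \<bar>z - z'\<bar> powr \<beta>" if "Q \<in> P" "z \<in> Q" "z' \<in> Q" for Q z z'
    proof -
      have "\<bar>f0 z - f0 z'\<bar> = \<bar>\<Sum>k\<le>m. a k * (G (Suc k) x0 z - G (Suc k) x0 z')\<bar>"
        unfolding f0_def Kk_def by (simp add: sum_subtractf algebra_simps)
      also have "\<dots> \<le> (\<Sum>k\<le>m. \<bar>a k * (G (Suc k) x0 z - G (Suc k) x0 z')\<bar>)" by (rule sum_abs)
      also have "\<dots> \<le> (\<Sum>k\<le>m. \<bar>a k\<bar> * (M * \<bar>z - z'\<bar> powr \<beta>))"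
        unfolding abs_mult by (intro sum_mono mult_left_mono G_col[OF that]) auto
      also have "\<dots> = (Cs * M) * \<bar>z - z'\<bar> powr \<beta>" unfolding Cs_def by (simp add: sum_distrib_right mult.assoc)
      finally show ?thesis .
    qed
    have "f0 y = 0" by (rule zero_from_AE[OF intv intne coverP \<beta>pos f0_hol ae y]) auto
    then show ?thesis unfolding f0_def .
  qed
  define b where "b = (\<lambda>i. - a i / a 0)"
  show ?thesis
  proof (intro exI[of _ b] ballI)
    fix x y :: real assume x: "x \<in> {0..1}" and y: "y \<in> {0..1}"
    have split: "{..m} = insert 0 {1..m}" by auto
    have "0 = Kk x y" using Kk_zero[OF x y] by simp
    also have "\<dots> = a 0 * G (Suc 0) x y + (\<Sum>k=1..m. a k * G (Suc k) x y)"
      unfolding Kk_def split by (subst sum.insert) auto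
    also have "\<dots> = a 0 * W x y + (\<Sum>k=1..m. a k * graphon_moment W (k + 1) x y)"
      using G_W[OF x y] x y by (simp add: G1 Wz_def)
    finally have eq0: "a 0 * W x y = - (\<Sum>k=1..m. a k * graphon_moment W (k + 1) x y)" by simp
    have "W x y = (\<Sum>k=1..m. b k * graphon_moment W (k + 1) x y)"
    proof -
      have "W x y = - (\<Sum>k=1..m. a k * graphon_moment W (k + 1) x y) / a 0"
        using eq0 a0 by (simp add: field_simps)
      also have "\<dots> = (\<Sum>k=1..m. b k * graphon_moment W (k + 1) x y)"
        unfolding b_def by (simp add: sum_divide_distrib sum_negf[symmetric] field_simps)
      finally show ?thesis .
    qed
    then show "W x y = (\<Sum>i=1..distinct_rank W. b i * graphon_moment W (i + 1) x y)"
      by (simp add: distinct_rank_def m_def E_def)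
  qed
qed

end

theorem proposition4p2:
  fixes W :: "real \<Rightarrow> real \<Rightarrow> real"
  assumes "graphon W"
    and "holder_by_parts W"
    and "finite (graphon_eigenvalues W)"
  shows "\<exists>\<beta> :: nat \<Rightarrow> real. \<forall>x\<in>{0..1}. \<forall>y\<in>{0..1}.
           W x y = (\<Sum>i=1..distinct_rank W. \<beta> i * graphon_moment W (i + 1) x y)"
proof -
  obtain PP b M where fin: "finite PP" and cov: "\<Union>PP = {0..1}"
    and Qp: "\<forall>Q\<in>PP. connected Q \<and> emeasure lborel (interior Q) > 0 \<and>
                 emeasure lborel (closure Q - interior Q) = 0"
    and bp: "b > 0" and hol: "\<forall>Qa\<in>PP. \<forall>Qb\<in>PP. holder_on b M (Qa \<times> Qb) W"
    using assms(2) unfolding holder_by_parts_def by blast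
  define M' where "M' = max M 0"
  have hol': "holder_on b M' (Qa \<times> Qb) W" if "Qa \<in> PP" "Qb \<in> PP" for Qa Qb
    unfolding holder_on_def
  proof (intro ballI)
    fix p q assume pq: "p \<in> Qa \<times> Qb" "q \<in> Qa \<times> Qb"
    have "\<bar>case_prod W p - case_prod W q\<bar> \<le> M * dist p q powr b"
      using hol that pq unfolding holder_on_def by blast
    also have "\<dots> \<le> M' * dist p q powr b" unfolding M'_def by (intro mult_right_mono) auto
    finally show "\<bar>case_prod W p - case_prod W q\<bar> \<le> M' * dist p q powr b" .
  qed
  have intv: "is_interval Q" if "Q \<in> PP" for Q
    using Qp that is_interval_connected_1 by blast
  have intne: "interior Q \<noteq> {}" if "Q \<in> PP" for Q
  proof
    assume "interior Q = {}"
    then show False using Qp that by auto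
  qed
  interpret gsetup W PP b M'
  proof
    show "graphon W" by (rule assms(1))
    show "finite PP" by (rule fin)
    show "\<Union>PP = {0..1}" by (rule cov)
    show "\<And>Q. Q \<in> PP \<Longrightarrow> is_interval Q" by (rule intv)
    show "\<And>Q. Q \<in> PP \<Longrightarrow> interior Q \<noteq> {}" by (rule intne)
    show "b > 0" by (rule bp)
    show "M' \<ge> 0" unfolding M'_def by simp
    show "\<And>Qa Qb. Qa \<in> PP \<Longrightarrow> Qb \<in> PP \<Longrightarrow> holder_on b M' (Qa \<times> Qb) W" by (rule hol')
  qed
  show ?thesis by (rule main_identity[OF assms(3)])
qed

end
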